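(* Let $Q:\mathbb{R}_{\ge0}\to\overline{\mathcal Q}_n$ be Riemann-integrable and sufficiently exciting. Then for every connected continuous-time interconnection $\Gamma=[\gamma_{ij}]\in\mathbb{R}^{p\times p}$, the solutions $x_i(\cdot)$ of $\dot x_i=Q_t\sum_{j\ne i}\gamma_{ij}(x_j-x_i)$, $i=1,\dots,p$, synchronize to the constant $\bar x(t)\equiv(r^T\otimes I_n)\mathbf x(0)$, where $\mathbf x=[x_1^T\cdots x_p^T]^T$ and $r\in\mathbb{R}^p$ satisfies $r^T\Gamma=0$, $r^T\mathbf 1=1$.
   Context: $|\cdot|$ induced 2-norm; $\mathbf 1$ all-ones vector; $\otimes$ Kronecker product; $\sigma_{\min}$ smallest singular value; $\mathcal Q_n$ symmetric positive semidefinite $n\times n$ matrices; $\overline{\mathcal Q}_n=\{R\in\mathcal Q_n:|R|\le1\}$. Let $\delta(\varepsilon,T):=\min\{\varepsilon/2,\varepsilon^3/(240T^5)\}$. $Q:\mathbb{R}_{\ge0}\to\mathcal Q_n$ is sufficiently exciting if there is a sequence $(\varepsilon_i,T_i)_{i\ge1}$ of pairs of positive reals with $\sigma_{\min}\big(\int_{t_i}^{t_i+T_i}Q_t\,dt\big)\ge\varepsilon_i$, where $t_1=0$, $t_i=\sum_{j<i}T_j$, and $\sum_{i=1}^\infty\delta(\varepsilon_i,T_i)=\infty$. Continuous-time interconnection: $\gamma_{ij}\ge0$ ($i\ne j$), $\gamma_{ii}=-\sum_{j\ne i}\gamma_{ij}$; graph edge $(n_i,n_j)$ iff $\gamma_{ij}>0$;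 connected if some node is reachable by a directed path from every other node. Synchronize to $\bar x$: $|x_i(t)-\bar x(t)|\to0$ as $t\to\infty$ for all $i$. *)

theory Defs
  imports "HOL-Analysis.Analysis"
begin

text \<open>Riemann integrability on a compact interval [a,b]: Riemann sums over tagged
  divisions of mesh-fineness given by a constant gauge converge.\<close>
definition riemann_integrable_on ::
  "(real \<Rightarrow> 'a::real_normed_vector) \<Rightarrow> real \<Rightarrow> real \<Rightarrow> bool" where
  "riemann_integrable_on f a b \<longleftrightarrow>
     (\<exists>I. \<forall>e>0. \<exists>d>0. \<forall>D. D tagged_division_of {a..b} \<and> (\<lambda>x. ball x d) fine D \<longrightarrow>
        norm ((\<Sum>(x,K)\<in>D. Henstock_Kurzweil_Integration.content K *\<^sub>R f x) - I) < e)"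

definition sigma_min :: "real^'n^'n \<Rightarrow> real" where
  "sigma_min A = Inf {norm (A *v x) | x. norm x = 1}"

definition Qbar :: "(real^'n^'n) set" where
  "Qbar = {R. transpose R = R \<and> (\<forall>x. 0 \<le> x \<bullet> (R *v x)) \<and> onorm (\<lambda>x. R *v x) \<le> 1}"

definition delta :: "real \<Rightarrow> real \<Rightarrow> real" where
  "delta \<epsilon> T = min (\<epsilon> / 2) (\<epsilon> ^ 3 / (240 * T ^ 5))"

text \<open>Sufficient excitation (sequence indexed from 0; t 0 = 0, t i = sum of T j for j < i).\<close>
definition sufficiently_exciting :: "(real \<Rightarrow> real^'n^'n) \<Rightarrow> bool" where
  "sufficiently_exciting Q \<longleftrightarrow>
     (\<exists>\<epsilon> T :: nat \<Rightarrow> real. (\<forall>i. 0 < \<epsilon> i \<and> 0 < T i) \<and>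
        (\<forall>i. sigma_min (integral {(\<Sum>j<i. T j) .. (\<Sum>j<i. T j) + T i} Q) \<ge> \<epsilon> i) \<and>
        \<not> summable (\<lambda>i. delta (\<epsilon> i) (T i)))"

definition interconnection :: "('p::finite \<Rightarrow> 'p \<Rightarrow> real) \<Rightarrow> bool" where
  "interconnection \<gamma> \<longleftrightarrow> (\<forall>i j. i \<noteq> j \<longrightarrow> 0 \<le> \<gamma> i j) \<and>
     (\<forall>i. \<gamma> i i = - (\<Sum>j\<in>UNIV - {i}. \<gamma> i j))"

definition connected_graph :: "('p::finite \<Rightarrow> 'p \<Rightarrow> real) \<Rightarrow> bool" where
  "connected_graph \<gamma> \<longleftrightarrow> (\<exists>k. \<forall>i. (i, k) \<in> {(a, b). 0 < \<gamma> a b}\<^sup>*)"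

end

theory Submission
  imports Defs
begin

lemma stoch_bounds:
  fixes M :: "'p::finite \<Rightarrow> 'p \<Rightarrow> real" and z :: "'p \<Rightarrow> real"
  assumes nn: "\<And>i j. 0 \<le> M i j" and rs: "\<And>i. (\<Sum>j\<in>UNIV. M i j) = 1"
    and col: "\<And>i. \<eta> \<le> M i k" and eta: "0 \<le> \<eta>"
    and lh: "\<And>j. lo \<le> z j \<and> z j \<le> hi"
  shows "lo + \<eta> * (z k - lo) \<le> (\<Sum>j\<in>UNIV. M i j * z j) \<and> (\<Sum>j\<in>UNIV. M i j * z j) \<le> hi - \<eta> * (hi - z k)"
proof -
  have e1: "(\<Sum>j\<in>UNIV. M i j * z j) - hi = (\<Sum>j\<in>UNIV. M i j * (z j - hi))"
    using rs[of i] by (simp add: sum_subtractf right_diff_distrib sum_distrib_right[symmetric])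
  have e2: "(\<Sum>j\<in>UNIV. M i j * z j) - lo = (\<Sum>j\<in>UNIV. M i j * (z j - lo))"
    using rs[of i] by (simp add: sum_subtractf right_diff_distrib sum_distrib_right[symmetric])
  have s1: "(\<Sum>j\<in>UNIV. M i j * (z j - hi)) = M i k * (z k - hi) + (\<Sum>j\<in>UNIV-{k}. M i j * (z j - hi))"
    by (simp add: sum.remove)
  have s2: "(\<Sum>j\<in>UNIV. M i j * (z j - lo)) = M i k * (z k - lo) + (\<Sum>j\<in>UNIV-{k}. M i j * (z j - lo))"
    by (simp add: sum.remove)
  have t1: "(\<Sum>j\<in>UNIV-{k}. M i j * (z j - hi)) \<le> 0"
    by (rule sum_nonpos) (use nn lh in \<open>simp add: mult_nonneg_nonpos\<close>)
  have t2: "(\<Sum>j\<in>UNIV-{k}. M i j * (z j - lo)) \<ge> 0"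
    by (rule sum_nonneg) (use nn lh in \<open>simp\<close>)
  have u1: "M i k * (z k - hi) \<le> \<eta> * (z k - hi)"
    using col[of i] lh[of k] by (simp add: mult_right_mono_neg)
  have u2: "M i k * (z k - lo) \<ge> \<eta> * (z k - lo)"
    using col[of i] lh[of k] by (simp add: mult_right_mono)
  show ?thesis using e1 e2 s1 s2 t1 t2 u1 u2 by (auto simp: algebra_simps)
qed

lemma balanced_bound:
  fixes y r :: "'p::finite \<Rightarrow> real"
  assumes lh: "\<And>j. lo \<le> y j \<and> y j \<le> hi" and ry: "(\<Sum>j\<in>UNIV. r j * y j) = 0"
    and rs: "(\<Sum>j\<in>UNIV. r j) = 1"
  shows "\<bar>y j\<bar> \<le> (1 + (\<Sum>i\<in>UNIV. \<bar>r i\<bar>)) * (hi - lo)"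
proof -
  have "lo = (\<Sum>i\<in>UNIV. r i * lo) - (\<Sum>i\<in>UNIV. r i * y i)"
    using rs ry by (simp add: sum_distrib_right[symmetric])
  also have "\<dots> = (\<Sum>i\<in>UNIV. r i * (lo - y i))"
    by (simp add: sum_subtractf right_diff_distrib)
  finally have "\<bar>lo\<bar> = \<bar>\<Sum>i\<in>UNIV. r i * (lo - y i)\<bar>" by simp
  also have "\<dots> \<le> (\<Sum>i\<in>UNIV. \<bar>r i * (lo - y i)\<bar>)" by (rule sum_abs)
  also have "\<dots> \<le> (\<Sum>i\<in>UNIV. \<bar>r i\<bar> * (hi - lo))"
    by (rule sum_mono) (use lh in \<open>auto simp: abs_mult intro!: mult_left_mono\<close>)
  finally have "\<bar>lo\<bar> \<le> (\<Sum>i\<in>UNIV. \<bar>r i\<bar>) * (hi - lo)" by (simp add: sum_distrib_right)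
  moreover have "\<bar>y j - lo\<bar> \<le> hi - lo" using lh[of j] by auto
  ultimately show ?thesis by (simp add: algebra_simps)
qed

lemma summable_pow_div:
  fixes d :: real
  assumes d0: "0 < d" and d1: "d < 1" and m0: "0 < m"
  shows "summable (\<lambda>k. d ^ (k div m))"
proof -
  define e where "e = d powr (1 / real m)"
  have e0: "0 < e" unfolding e_def using d0 by simp
  have e1: "e < 1" unfolding e_def using d0 d1 m0 powr_less_mono2[of "1 / real m" d 1] by simp
  have sg: "summable (\<lambda>k. (1/d) * e ^ k)" using e0 e1 by (intro summable_mult summable_geometric) simp
  have bnd: "norm (d ^ (k div m)) \<le> (1/d) * e ^ k" for k
  proof -
    have km: "real k = real m * real (k div m) + real (k mod m)"
      by (simp only: of_nat_mult[symmetric] of_nat_add[symmetric] mult_div_mod_eq)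
    have "real (k mod m) < real m" using m0 by simp
    then have kd: "real (k div m) \<ge> real k / real m - 1"
      using m0 km by (simp add: field_simps)
    have "d powr real (k div m) \<le> d powr (real k / real m - 1)"
      by (rule powr_mono'[OF kd]) (use d0 d1 in auto)
    also have "\<dots> = d powr (real k / real m) / d"
      using d0 by (simp add: powr_diff)
    also have "d powr (real k / real m) = e powr real k"
      unfolding e_def by (simp add: powr_powr)
    also have "e powr real k = e ^ k"
      using e0 by (simp add: powr_realpow)
    finally have "d powr real (k div m) \<le> e ^ k / d" .
    moreover have "d powr real (k div m) = d ^ (k div m)"
      using d0 by (simp add: powr_realpow)
    moreover have "norm (d ^ (k div m)) = d ^ (k div m)" using d0 by simp
    ultimately show ?thesis by simp
  qed
  show ?thesis by (rule summable_comparison_test[OF _ sg]) (use bnd in blast)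
qed

locale agents =
  fixes \<gamma> :: "'p::finite \<Rightarrow> 'p \<Rightarrow> real" and r :: "'p \<Rightarrow> real"
  assumes \<Gamma>: "interconnection \<gamma>" and conn: "connected_graph \<gamma>"
    and r_left: "\<And>j. (\<Sum>i\<in>UNIV. r i * \<gamma> i j) = 0" and r_sum: "(\<Sum>i\<in>UNIV. r i) = 1"
begin

definition h :: real where "h = 1 / (1 + (\<Sum>i\<in>UNIV. \<bar>\<gamma> i i\<bar>))"
definition A :: "'p \<Rightarrow> 'p \<Rightarrow> real" where "A i j = (if i = j then 1 else 0) + h * \<gamma> i j"

lemma sum_delta_mult[simp]: "(\<Sum>j\<in>UNIV. (if (i::'q::finite) = j then 1 else 0) * f j) = (f i::real)"
proof -
  have "(\<Sum>j\<in>UNIV. (if i = j then 1 else 0) * f j) = (\<Sum>j\<in>UNIV. if i = j then f j else 0)"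
    by (rule sum.cong) auto
  then show ?thesis by (simp add: sum.delta)
qed

lemma sum_delta_mult2[simp]: "(\<Sum>j\<in>UNIV. f j * (if j = (i::'q::finite) then 1 else 0)) = (f i::real)"
proof -
  have "(\<Sum>j\<in>UNIV. f j * (if j = i then 1 else 0)) = (\<Sum>j\<in>UNIV. if j = i then f j else 0)"
    by (rule sum.cong) auto
  then show ?thesis by (simp add: sum.delta')
qed

lemma h_pos: "0 < h" unfolding h_def by (simp add: add_pos_nonneg sum_nonneg)

lemma h_diag: "h * \<bar>\<gamma> i i\<bar> < 1"
proof -
  have "\<bar>\<gamma> i i\<bar> \<le> (\<Sum>i\<in>UNIV. \<bar>\<gamma> i i\<bar>)" by (rule member_le_sum) auto
  then show ?thesis unfolding h_def by (simp add: field_simps add_pos_nonneg sum_nonneg)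
qed

lemma h_diag': "- 1 < h * \<gamma> i i"
proof -
  have "\<bar>h * \<gamma> i i\<bar> < 1" using h_diag[of i] h_pos by (simp add: abs_mult)
  then show ?thesis by (simp add: abs_less_iff)
qed

lemma gamma_off: "i \<noteq> j \<Longrightarrow> 0 \<le> \<gamma> i j" using \<Gamma> unfolding interconnection_def by auto

lemma gamma_row: "(\<Sum>j\<in>UNIV. \<gamma> i j) = 0"
proof -
  have "\<gamma> i i = - (\<Sum>j\<in>UNIV - {i}. \<gamma> i j)" using \<Gamma> unfolding interconnection_def by auto
  then show ?thesis by (simp add: sum.remove[of UNIV i])
qed

lemma A_nonneg: "0 \<le> A i j"
proof (cases "i = j")
  case True then show ?thesis using h_diag'[of i] unfolding A_def by simp
next
  case False then show ?thesis using gamma_off[OF False] h_pos unfolding A_def by simp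
qed

lemma A_diag: "0 < A i i"
  using h_diag'[of i] unfolding A_def by simp

lemma A_row: "(\<Sum>j\<in>UNIV. A i j) = 1"
  unfolding A_def by (simp add: sum.distrib sum_distrib_left[symmetric] gamma_row)

lemma A_r: "(\<Sum>i\<in>UNIV. r i * A i j) = r j"
proof -
  have "(\<Sum>i\<in>UNIV. r i * A i j) = (\<Sum>i\<in>UNIV. r i * (if i = j then 1 else 0)) + h * (\<Sum>i\<in>UNIV. r i * \<gamma> i j)"
    unfolding A_def by (simp add: distrib_left sum.distrib sum_distrib_left mult_ac)
  then show ?thesis using r_left[of j] by (simp add: if_distrib cong: if_cong)
qed

lemma A_edge: "0 < \<gamma> i j \<Longrightarrow> 0 < A i j"
proof -
  assume g: "0 < \<gamma> i j"
  show ?thesis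
  proof (cases "i = j")
    case True then show ?thesis using A_diag by simp
  next
    case False then show ?thesis using g h_pos unfolding A_def by simp
  qed
qed

fun Apow :: "nat \<Rightarrow> 'p \<Rightarrow> 'p \<Rightarrow> real" where
  "Apow 0 i j = (if i = j then 1 else 0)"
| "Apow (Suc k) i j = (\<Sum>l\<in>UNIV. A i l * Apow k l j)"

lemma Apow_nonneg: "0 \<le> Apow k i j"
  by (induction k arbitrary: i j) (auto intro!: sum_nonneg mult_nonneg_nonneg A_nonneg)

lemma Apow_row: "(\<Sum>j\<in>UNIV. Apow k i j) = 1"
proof (induction k arbitrary: i)
  case 0 then show ?case by simp
next
  case (Suc k)
  have "(\<Sum>j\<in>UNIV. Apow (Suc k) i j) = (\<Sum>l\<in>UNIV. A i l * (\<Sum>j\<in>UNIV. Apow k l j))"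
    unfolding Apow.simps sum_distrib_left by (rule sum.swap)
  also have "\<dots> = 1" using Suc A_row by simp
  finally show ?case .
qed

lemma Apow_r: "(\<Sum>i\<in>UNIV. r i * Apow k i j) = r j"
proof (induction k arbitrary: j)
  case 0 then show ?case by (simp add: if_distrib cong: if_cong)
next
  case (Suc k)
  have "(\<Sum>i\<in>UNIV. r i * Apow (Suc k) i j) = (\<Sum>l\<in>UNIV. (\<Sum>i\<in>UNIV. r i * A i l) * Apow k l j)"
    unfolding Apow.simps sum_distrib_left sum_distrib_right by (subst sum.swap) (simp add: mult_ac)
  also have "\<dots> = r j" using Suc A_r by simp
  finally show ?case .
qed

lemma Apow_mono: "0 < Apow k i j \<Longrightarrow> 0 < Apow (Suc k) i j"
proof -
  assume a: "0 < Apow k i j"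
  have "A i i * Apow k i j \<le> (\<Sum>l\<in>UNIV. A i l * Apow k l j)"
    by (rule member_le_sum) (auto intro: mult_nonneg_nonneg A_nonneg Apow_nonneg)
  moreover have "0 < A i i * Apow k i j" using a A_diag by simp
  ultimately show ?thesis by simp
qed

lemma Apow_mono': assumes "k \<le> k'" "0 < Apow k i j" shows "0 < Apow k' i j"
  using assms by (induction k' rule: dec_induct) (auto simp del: Apow.simps intro: Apow_mono)

lemma Apow_path: "(i, k) \<in> {(a, b). 0 < \<gamma> a b}\<^sup>* \<Longrightarrow> \<exists>l. 0 < Apow l i k"
proof (induction rule: converse_rtrancl_induct)
  case base then show ?case by (intro exI[of _ 0]) simp
next
  case (step y z)
  then obtain l where l: "0 < Apow l z k" by auto
  have "A y z * Apow l z k \<le> (\<Sum>j\<in>UNIV. A y j * Apow l j k)"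
    by (rule member_le_sum) (auto intro: mult_nonneg_nonneg A_nonneg Apow_nonneg)
  moreover have "0 < A y z * Apow l z k" using l A_edge step(1) by simp
  ultimately show ?case by (intro exI[of _ "Suc l"]) simp
qed

lemma root_col: "\<exists>m k0 \<eta>. 0 < m \<and> 0 < \<eta> \<and> \<eta> \<le> 1/2 \<and> (\<forall>i. \<eta> \<le> Apow m i k0)"
proof -
  obtain k0 where k0: "\<And>i. (i, k0) \<in> {(a, b). 0 < \<gamma> a b}\<^sup>*" using conn unfolding connected_graph_def by auto
  have "\<forall>i. \<exists>l. 0 < Apow l i k0" using Apow_path[OF k0] by auto
  then obtain L where L: "\<And>i. 0 < Apow (L i) i k0" by metis
  define m where "m = Suc (Max (range L))"
  have pos: "0 < Apow m i k0" for i
    by (rule Apow_mono'[OF _ L[of i]]) (simp add: m_def le_SucI)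
  define \<eta> where "\<eta> = min (1/2) (Min ((\<lambda>i. Apow m i k0) ` UNIV))"
  have "0 < Min ((\<lambda>i. Apow m i k0) ` UNIV)" using pos by simp
  then have "0 < \<eta>" unfolding \<eta>_def by simp
  moreover have "\<eta> \<le> Apow m i k0" for i unfolding \<eta>_def
    by (rule min.coboundedI2) simp
  moreover have "\<eta> \<le> 1/2" unfolding \<eta>_def by simp
  moreover have "0 < m" unfolding m_def by simp
  ultimately show ?thesis by blast
qed

definition az :: "('p \<Rightarrow> real) \<Rightarrow> 'p \<Rightarrow> real" where
  "az z = (\<lambda>i. \<Sum>j\<in>UNIV. A i j * z j)"

lemma az_pow: "(az ^^ k) z i = (\<Sum>j\<in>UNIV. Apow k i j * z j)"
proof (induction k arbitrary: i)
  case 0 then show ?case by simp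
next
  case (Suc k)
  have "(az ^^ Suc k) z i = az ((az ^^ k) z) i" by simp
  also have "\<dots> = (\<Sum>l\<in>UNIV. A i l * (az ^^ k) z l)" by (simp add: az_def)
  also have "\<dots> = (\<Sum>l\<in>UNIV. A i l * (\<Sum>j\<in>UNIV. Apow k l j * z j))"
    using Suc by simp
  also have "\<dots> = (\<Sum>j\<in>UNIV. Apow (Suc k) i j * z j)"
    unfolding Apow.simps sum_distrib_left sum_distrib_right by (subst sum.swap) (simp add: mult_ac)
  finally show ?case .
qed

lemma osc_step:
  assumes col: "\<And>i. \<eta> \<le> Apow m i k0" and eta: "0 \<le> \<eta>" "\<eta> \<le> 1"
    and zb: "\<And>j. lo0 \<le> z j \<and> z j \<le> hi0"
  shows "\<exists>lo hi. (\<forall>j. lo \<le> (az ^^ (q * m)) z j \<and> (az ^^ (q * m)) z j \<le> hi) \<and> hi - lo \<le> (1 - \<eta>) ^ q * (hi0 - lo0)"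
proof (induction q)
  case 0 then show ?case using zb by auto
next
  case (Suc q)
  then obtain lo hi where lh: "\<And>j. lo \<le> (az ^^ (q * m)) z j \<and> (az ^^ (q * m)) z j \<le> hi"
    and w: "hi - lo \<le> (1 - \<eta>) ^ q * (hi0 - lo0)" by auto
  define y where "y = (az ^^ (q * m)) z"
  have e: "(az ^^ (Suc q * m)) z = (az ^^ m) y"
    unfolding y_def by (simp add: funpow_add)
  have b0: "lo + \<eta> * (y k0 - lo) \<le> (\<Sum>b\<in>UNIV. Apow m a b * y b) \<and> (\<Sum>b\<in>UNIV. Apow m a b * y b) \<le> hi - \<eta> * (hi - y k0)" for a
    by (rule stoch_bounds[OF Apow_nonneg Apow_row col]) (use eta lh y_def in auto)
  have b: "lo + \<eta> * (y k0 - lo) \<le> (az ^^ (Suc q * m)) z a \<and> (az ^^ (Suc q * m)) z a \<le> hi - \<eta> * (hi - y k0)" for a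
    unfolding e az_pow by (rule b0)
  have "hi - \<eta> * (hi - y k0) - (lo + \<eta> * (y k0 - lo)) = (1 - \<eta>) * (hi - lo)" by (simp add: algebra_simps)
  also have "\<dots> \<le> (1 - \<eta>) * ((1 - \<eta>) ^ q * (hi0 - lo0))" using w eta by (intro mult_left_mono) auto
  finally have "hi - \<eta> * (hi - y k0) - (lo + \<eta> * (y k0 - lo)) \<le> (1 - \<eta>) ^ Suc q * (hi0 - lo0)" by simp
  then show ?case using b by blast
qed

lemma decay_scalar:
  obtains K \<rho> m where "0 \<le> K" "0 < \<rho>" "\<rho> < 1" "0 < m"
    "\<And>k j l. \<bar>Apow k j l - r l\<bar> \<le> K * \<rho> ^ (k div m)"
proof -
  obtain m k0 \<eta> where m: "0 < m" and eta: "0 < \<eta>" "\<eta> \<le> 1/2" and col: "\<And>i. \<eta> \<le> Apow m i k0"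
    using root_col by blast
  define R where "R = (\<Sum>i\<in>UNIV. \<bar>r i\<bar>)"
  have R0: "0 \<le> R" unfolding R_def by (simp add: sum_nonneg)
  have rl: "\<bar>r l\<bar> \<le> R" for l unfolding R_def by (rule member_le_sum) auto
  have main: "\<bar>Apow k j l - r l\<bar> \<le> ((1 + R) * (1 + 2 * R)) * (1 - \<eta>) ^ (k div m)" for k j l
  proof -
    define z where "z = (\<lambda>i. (if i = l then 1 else 0) - r l)"
    have zb: "- R \<le> z i \<and> z i \<le> 1 + R" for i using rl[of l] unfolding z_def by auto
    have "\<exists>lo hi. (\<forall>j. lo \<le> (az ^^ ((k div m) * m)) z j \<and> (az ^^ ((k div m) * m)) z j \<le> hi) \<and> hi - lo \<le> (1 - \<eta>) ^ (k div m) * (1 + R - (- R))"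
      by (rule osc_step[OF col]) (use eta zb in auto)
    then obtain lo hi where lh: "\<And>j. lo \<le> (az ^^ ((k div m) * m)) z j \<and> (az ^^ ((k div m) * m)) z j \<le> hi"
      and w: "hi - lo \<le> (1 - \<eta>) ^ (k div m) * (1 + R - (- R))" by blast
    define y where "y = (az ^^ ((k div m) * m)) z"
    have kk: "k = k mod m + (k div m) * m" by simp
    have e: "(az ^^ k) z = (az ^^ (k mod m)) y"
      unfolding y_def by (subst kk) (simp only: funpow_add comp_apply)
    have b: "lo + 0 * (y k0 - lo) \<le> (\<Sum>b\<in>UNIV. Apow (k mod m) a b * y b) \<and> (\<Sum>b\<in>UNIV. Apow (k mod m) a b * y b) \<le> hi - 0 * (hi - y k0)" for a
      by (rule stoch_bounds[OF Apow_nonneg Apow_row]) (use lh y_def Apow_nonneg in auto)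
    have lh2: "lo \<le> (az ^^ k) z a \<and> (az ^^ k) z a \<le> hi" for a
      unfolding e az_pow using b[of a] by simp
    have rz: "(\<Sum>i\<in>UNIV. r i * (az ^^ k) z i) = 0"
    proof -
      have "(\<Sum>i\<in>UNIV. r i * (az ^^ k) z i) = (\<Sum>j\<in>UNIV. (\<Sum>i\<in>UNIV. r i * Apow k i j) * z j)"
        unfolding az_pow sum_distrib_left sum_distrib_right by (subst sum.swap) (simp add: mult_ac)
      also have "\<dots> = (\<Sum>j\<in>UNIV. r j * z j)" by (simp add: Apow_r)
      also have "\<dots> = (\<Sum>j\<in>UNIV. r j * (if j = l then 1 else 0)) - (\<Sum>j\<in>UNIV. r j) * r l"
        unfolding z_def by (simp add: right_diff_distrib sum_subtractf sum_distrib_right)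
      also have "\<dots> = 0" using r_sum by simp
      finally show ?thesis .
    qed
    have "(az ^^ k) z j = (\<Sum>b\<in>UNIV. Apow k j b * (if b = l then 1 else 0)) - (\<Sum>b\<in>UNIV. Apow k j b) * r l"
      unfolding az_pow z_def by (simp add: right_diff_distrib sum_subtractf sum_distrib_right)
    then have val: "(az ^^ k) z j = Apow k j l - r l" using Apow_row[of k j] by simp
    have "\<bar>(az ^^ k) z j\<bar> \<le> (1 + R) * (hi - lo)"
      unfolding R_def by (rule balanced_bound[OF lh2 rz r_sum])
    also have "\<dots> \<le> (1 + R) * ((1 - \<eta>) ^ (k div m) * (1 + 2 * R))" using w R0 by (intro mult_left_mono) (auto simp: add.commute)
    finally show ?thesis using val by (simp add: mult_ac)
  qed
  show ?thesis
    by (rule that[of "(1 + R) * (1 + 2 * R)" "1 - \<eta>" m]) (use R0 eta m main in auto)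
qed

end

context agents begin

definition act :: "('p \<Rightarrow> 'v::real_vector) \<Rightarrow> 'p \<Rightarrow> 'v" where
  "act W = (\<lambda>i. \<Sum>j\<in>UNIV. A i j *\<^sub>R W j)"
definition G :: "('p \<Rightarrow> 'v::real_vector) \<Rightarrow> 'p \<Rightarrow> 'v" where
  "G W = (\<lambda>i. \<Sum>j\<in>UNIV. \<gamma> i j *\<^sub>R W j)"
definition rsum :: "('p \<Rightarrow> 'v::real_vector) \<Rightarrow> 'v" where
  "rsum W = (\<Sum>i\<in>UNIV. r i *\<^sub>R W i)"
definition ip :: "('p \<Rightarrow> 'v::real_inner) \<Rightarrow> ('p \<Rightarrow> 'v) \<Rightarrow> real" where
  "ip X Y = (\<Sum>i\<in>UNIV. X i \<bullet> Y i)"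
definition nrm1 :: "('p \<Rightarrow> 'v::real_normed_vector) \<Rightarrow> real" where
  "nrm1 X = (\<Sum>i\<in>UNIV. norm (X i))"

lemma nrm1_nonneg: "0 \<le> nrm1 X" unfolding nrm1_def by (simp add: sum_nonneg)
lemma norm_le_nrm1: "norm (X i) \<le> nrm1 X" unfolding nrm1_def by (rule member_le_sum) auto

lemma act_pow: "(act ^^ k) W i = (\<Sum>j\<in>UNIV. Apow k i j *\<^sub>R W j)"
proof (induction k arbitrary: i)
  case 0
  have "(\<Sum>j\<in>UNIV. Apow 0 i j *\<^sub>R W j) = (\<Sum>j\<in>UNIV. if i = j then W j else 0)"
    by (rule sum.cong) auto
  then show ?case by (simp add: sum.delta)
next
  case (Suc k)
  have "(act ^^ Suc k) W i = act ((act ^^ k) W) i" by simp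
  also have "\<dots> = (\<Sum>l\<in>UNIV. A i l *\<^sub>R (act ^^ k) W l)" by (simp add: act_def)
  also have "\<dots> = (\<Sum>l\<in>UNIV. A i l *\<^sub>R (\<Sum>j\<in>UNIV. Apow k l j *\<^sub>R W j))"
    using Suc by simp
  also have "\<dots> = (\<Sum>j\<in>UNIV. Apow (Suc k) i j *\<^sub>R W j)"
    unfolding Apow.simps scaleR_sum_right scaleR_sum_left by (subst sum.swap) simp
  finally show ?case .
qed

lemma act_pow_lin: "(act ^^ k) (\<lambda>i. a *\<^sub>R U i + b *\<^sub>R V i) j = a *\<^sub>R (act ^^ k) U j + b *\<^sub>R (act ^^ k) V j"
  by (simp add: act_pow scaleR_add_right sum.distrib scaleR_sum_right mult.commute)

lemma act_pow_add: "(act ^^ k) (\<lambda>i. U i + V i) j = (act ^^ k) U j + (act ^^ k) V j"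
  using act_pow_lin[of k 1 U 1 V j] by simp

lemma act_pow_diff: "(act ^^ k) (\<lambda>i. U i - V i) j = (act ^^ k) U j - (act ^^ k) V j"
  using act_pow_lin[of k 1 U "-1" V j] by simp

lemma act_pow_L: "linear L \<Longrightarrow> (act ^^ k) (\<lambda>i. L (U i)) j = L ((act ^^ k) U j)"
  by (simp add: act_pow linear_sum linear_scale)

lemma act_eq: "act W i = W i + h *\<^sub>R G W i"
proof -
  have "act W i = (\<Sum>j\<in>UNIV. (if i = j then 1 else 0) *\<^sub>R W j) + (\<Sum>j\<in>UNIV. (h * \<gamma> i j) *\<^sub>R W j)"
    by (simp add: act_def A_def scaleR_add_left sum.distrib)
  also have "(\<Sum>j\<in>UNIV. (if i = j then 1 else 0) *\<^sub>R W j) = (\<Sum>j\<in>UNIV. if i = j then W j else 0)"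
    by (rule sum.cong) auto
  finally show ?thesis by (simp add: sum.delta G_def scaleR_sum_right)
qed

lemma G_eq: "G W i = (1 / h) *\<^sub>R (act W i - W i)"
  using act_eq[of W i] h_pos by simp

lemma rsum_pow: "rsum ((act ^^ k) W) = rsum W"
proof -
  have "rsum ((act ^^ k) W) = (\<Sum>j\<in>UNIV. (\<Sum>i\<in>UNIV. r i * Apow k i j) *\<^sub>R W j)"
    unfolding rsum_def act_pow scaleR_sum_right scaleR_sum_left by (subst sum.swap) simp
  then show ?thesis by (simp add: Apow_r rsum_def)
qed

lemma rsum_G: "rsum (G W) = 0"
proof -
  have "rsum (G W) = (\<Sum>j\<in>UNIV. (\<Sum>i\<in>UNIV. r i * \<gamma> i j) *\<^sub>R W j)"
    unfolding rsum_def G_def scaleR_sum_right scaleR_sum_left by (subst sum.swap) simp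
  then show ?thesis by (simp add: r_left)
qed

lemma rsum_lin: "rsum (\<lambda>i. a *\<^sub>R U i + b *\<^sub>R V i) = a *\<^sub>R rsum U + b *\<^sub>R rsum V"
  by (simp add: rsum_def scaleR_add_right sum.distrib scaleR_sum_right mult.commute)

lemma rsum_L: "linear L \<Longrightarrow> rsum (\<lambda>i. L (U i)) = L (rsum U)"
  by (simp add: rsum_def linear_sum linear_scale)

lemma decay_vec:
  obtains K \<rho> m where "0 \<le> K" "0 < \<rho>" "\<rho> < 1" "0 < m"
    "\<And>k j (W :: 'p \<Rightarrow> 'v::real_normed_vector). rsum W = 0 \<Longrightarrow> norm ((act ^^ k) W j) \<le> K * \<rho> ^ (k div m) * nrm1 W"
proof -
  obtain K \<rho> m where K: "0 \<le> K" "0 < \<rho>" "\<rho> < 1" "0 < m"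
    and b: "\<And>k j l. \<bar>Apow k j l - r l\<bar> \<le> K * \<rho> ^ (k div m)" using decay_scalar by blast
  have "norm ((act ^^ k) W j) \<le> K * \<rho> ^ (k div m) * nrm1 W" if "rsum W = 0" for k j and W :: "'p \<Rightarrow> 'v"
  proof -
    have "(act ^^ k) W j = (\<Sum>l\<in>UNIV. Apow k j l *\<^sub>R W l) - rsum W" using that by (simp add: act_pow)
    also have "\<dots> = (\<Sum>l\<in>UNIV. (Apow k j l - r l) *\<^sub>R W l)"
      by (simp add: rsum_def scaleR_diff_left sum_subtractf)
    finally have "norm ((act ^^ k) W j) \<le> (\<Sum>l\<in>UNIV. norm ((Apow k j l - r l) *\<^sub>R W l))"
      by (simp only: norm_sum)
    also have "\<dots> \<le> (\<Sum>l\<in>UNIV. K * \<rho> ^ (k div m) * norm (W l))"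
      by (rule sum_mono) (simp add: mult_right_mono b)
    finally show ?thesis by (simp add: nrm1_def sum_distrib_left)
  qed
  then show ?thesis using that K by blast
qed

definition Bf :: "('p \<Rightarrow> 'v::real_inner) \<Rightarrow> ('p \<Rightarrow> 'v) \<Rightarrow> real" where
  "Bf W U = (\<Sum>k. ip ((act ^^ k) W) ((act ^^ k) U))"

lemma Bf_facts:
  obtains CB where "0 \<le> CB"
    "\<And>W U :: 'p \<Rightarrow> 'v::real_inner. rsum W = 0 \<Longrightarrow> rsum U = 0 \<Longrightarrow> summable (\<lambda>k. ip ((act ^^ k) W) ((act ^^ k) U))"
    "\<And>W U :: 'p \<Rightarrow> 'v::real_inner. rsum W = 0 \<Longrightarrow> rsum U = 0 \<Longrightarrow> \<bar>Bf W U\<bar> \<le> CB * nrm1 W * nrm1 U"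
proof -
  obtain K \<rho> m where K: "0 \<le> K" "0 < \<rho>" "\<rho> < 1" "0 < m"
    and dv: "\<And>k j (W :: 'p \<Rightarrow> 'v). rsum W = 0 \<Longrightarrow> norm ((act ^^ k) W j) \<le> K * \<rho> ^ (k div m) * nrm1 W"
    using decay_vec by blast
  have sg: "summable (\<lambda>k. (\<rho>^2) ^ (k div m))"
    using K by (intro summable_pow_div) (auto simp: power_less_one_iff)
  define CB where "CB = real CARD('p) * K^2 * (\<Sum>k. (\<rho>^2) ^ (k div m))"
  have CB0: "0 \<le> CB" unfolding CB_def using K by (intro mult_nonneg_nonneg suminf_nonneg sg) auto
  have tb: "\<bar>ip ((act ^^ k) W) ((act ^^ k) U)\<bar> \<le> (real CARD('p) * K^2 * nrm1 W * nrm1 U) * (\<rho>^2) ^ (k div m)"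
    if "rsum W = 0" "rsum U = 0" for k and W U :: "'p \<Rightarrow> 'v"
  proof -
    have "\<bar>ip ((act ^^ k) W) ((act ^^ k) U)\<bar> \<le> (\<Sum>j\<in>UNIV. norm ((act ^^ k) W j) * norm ((act ^^ k) U j))"
      unfolding ip_def by (rule order_trans[OF sum_abs sum_mono]) (simp add: Cauchy_Schwarz_ineq2)
    also have "\<dots> \<le> (\<Sum>j\<in>(UNIV::'p set). (K * \<rho> ^ (k div m) * nrm1 W) * (K * \<rho> ^ (k div m) * nrm1 U))"
      by (rule sum_mono) (intro mult_mono dv that norm_ge_zero mult_nonneg_nonneg nrm1_nonneg zero_le_power; use K in simp)
    also have "\<dots> = (real CARD('p) * K^2 * nrm1 W * nrm1 U) * (\<rho>^2) ^ (k div m)"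
      by (simp add: power_mult_distrib power_mult[symmetric] mult.commute power2_eq_square mult_ac)
    finally show ?thesis .
  qed
  have sm: "summable (\<lambda>k. ip ((act ^^ k) W) ((act ^^ k) U))" if "rsum W = 0" "rsum U = 0" for W U :: "'p \<Rightarrow> 'v"
    by (rule summable_comparison_test[OF _ summable_mult[OF sg]]) (use tb[OF that] in auto)
  have "\<bar>Bf W U\<bar> \<le> CB * nrm1 W * nrm1 U" if "rsum W = 0" "rsum U = 0" for W U :: "'p \<Rightarrow> 'v"
  proof -
    define C0 where "C0 = real CARD('p) * K^2 * nrm1 W * nrm1 U"
    have s2: "summable (\<lambda>k. C0 * (\<rho>^2) ^ (k div m))" by (rule summable_mult[OF sg])
    have tb': "\<bar>ip ((act ^^ k) W) ((act ^^ k) U)\<bar> \<le> C0 * (\<rho>^2) ^ (k div m)" for k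
      unfolding C0_def by (rule tb[OF that])
    have sa: "summable (\<lambda>k. \<bar>ip ((act ^^ k) W) ((act ^^ k) U)\<bar>)"
      by (rule summable_comparison_test[OF _ s2]) (use tb' in auto)
    have "\<bar>Bf W U\<bar> \<le> (\<Sum>k. \<bar>ip ((act ^^ k) W) ((act ^^ k) U)\<bar>)"
      unfolding Bf_def by (rule summable_rabs[OF sa])
    also have "\<dots> \<le> (\<Sum>k. C0 * (\<rho>^2) ^ (k div m))"
      by (rule suminf_le[OF tb' sa s2])
    also have "\<dots> = CB * nrm1 W * nrm1 U"
      unfolding CB_def C0_def by (subst suminf_mult[OF sg]) (simp add: mult_ac)
    finally show ?thesis .
  qed
  then show ?thesis using that CB0 sm by blast
qed

end

context agents begin

lemma Bf_sym: "Bf W U = Bf U W"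
  unfolding Bf_def ip_def by (simp add: inner_commute)

lemma ip_add2: "ip X (\<lambda>i. Y i + Z i) = ip X Y + ip X Z"
  unfolding ip_def by (simp add: inner_add_right sum.distrib)

lemma ip_scale2: "ip X (\<lambda>i. c *\<^sub>R Y i) = c * ip X Y"
  unfolding ip_def by (simp add: sum_distrib_left)

lemma summ_ip:
  fixes W U :: "'p \<Rightarrow> 'v::real_inner"
  assumes "rsum W = 0" "rsum U = 0"
  shows "summable (\<lambda>k. ip ((act ^^ k) W) ((act ^^ k) U))"
proof -
  obtain CB where "0 \<le> CB"
    and sm: "\<And>W U :: 'p \<Rightarrow> 'v. rsum W = 0 \<Longrightarrow> rsum U = 0 \<Longrightarrow> summable (\<lambda>k. ip ((act ^^ k) W) ((act ^^ k) U))"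
    and "\<And>W U :: 'p \<Rightarrow> 'v. rsum W = 0 \<Longrightarrow> rsum U = 0 \<Longrightarrow> \<bar>Bf W U\<bar> \<le> CB * nrm1 W * nrm1 U"
    by (rule Bf_facts, rule that)
  show ?thesis by (rule sm[OF assms])
qed

lemma Bf_bound:
  obtains CB where "0 \<le> CB" "\<And>W U :: 'p \<Rightarrow> 'v::real_inner. rsum W = 0 \<Longrightarrow> rsum U = 0 \<Longrightarrow> \<bar>Bf W U\<bar> \<le> CB * nrm1 W * nrm1 U"
proof -
  obtain CB where c0: "0 \<le> CB"
    and sm: "\<And>W U :: 'p \<Rightarrow> 'v. rsum W = 0 \<Longrightarrow> rsum U = 0 \<Longrightarrow> summable (\<lambda>k. ip ((act ^^ k) W) ((act ^^ k) U))"
    and bd: "\<And>W U :: 'p \<Rightarrow> 'v. rsum W = 0 \<Longrightarrow> rsum U = 0 \<Longrightarrow> \<bar>Bf W U\<bar> \<le> CB * nrm1 W * nrm1 U"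
    by (rule Bf_facts, rule that)
  show ?thesis by (rule that[OF c0 bd])
qed

lemma rsum_add: "rsum (\<lambda>i. U i + V i) = rsum U + rsum V"
  using rsum_lin[of 1 U 1 V] by simp

lemma Bf_add2:
  fixes W U V :: "'p \<Rightarrow> 'v::real_inner"
  assumes "rsum W = 0" "rsum U = 0" "rsum V = 0"
  shows "Bf W (\<lambda>i. U i + V i) = Bf W U + Bf W V"
proof -
  have "Bf W (\<lambda>i. U i + V i) = (\<Sum>k. ip ((act ^^ k) W) ((act ^^ k) U) + ip ((act ^^ k) W) ((act ^^ k) V))"
  proof -
    have "(act ^^ k) (\<lambda>i. U i + V i) = (\<lambda>j. (act ^^ k) U j + (act ^^ k) V j)" for k
      by (rule ext) (rule act_pow_add)
    then show ?thesis unfolding Bf_def by (simp add: ip_add2)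
  qed
  also have "\<dots> = Bf W U + Bf W V"
    unfolding Bf_def by (rule suminf_add[symmetric]) (use summ_ip assms in auto)
  finally show ?thesis .
qed

lemma Bf_expand:
  fixes X D :: "'p \<Rightarrow> 'v::real_inner"
  assumes "rsum X = 0" "rsum D = 0"
  shows "Bf (\<lambda>i. X i + D i) (\<lambda>i. X i + D i) = Bf X X + 2 * Bf X D + Bf D D"
proof -
  have r: "rsum (\<lambda>i. X i + D i) = 0" using assms by (simp add: rsum_add)
  have "Bf (\<lambda>i. X i + D i) (\<lambda>i. X i + D i) = Bf (\<lambda>i. X i + D i) X + Bf (\<lambda>i. X i + D i) D"
    using Bf_add2[OF r assms] .
  also have "Bf (\<lambda>i. X i + D i) X = Bf X X + Bf X D"
    using Bf_add2[OF assms(1) assms] Bf_sym[of "\<lambda>i. X i + D i" X] Bf_sym[of "\<lambda>i. X i + D i" X] by simp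
  also have "Bf (\<lambda>i. X i + D i) D = Bf D X + Bf D D"
    using Bf_add2[OF assms(2) assms] Bf_sym[of "\<lambda>i. X i + D i" D] by simp
  finally show ?thesis using Bf_sym[of D X] by simp
qed

lemma Bf_ge:
  fixes W :: "'p \<Rightarrow> 'v::real_inner"
  assumes "rsum W = 0"
  shows "ip W W \<le> Bf W W"
proof -
  have "(\<Sum>k\<in>{0}. ip ((act ^^ k) W) ((act ^^ k) W)) \<le> Bf W W"
    unfolding Bf_def by (rule sum_le_suminf[OF summ_ip[OF assms assms]]) (auto simp: ip_def sum_nonneg)
  then show ?thesis by simp
qed

lemma Bf_key:
  fixes Z :: "'p \<Rightarrow> 'v::real_inner" and L :: "'v \<Rightarrow> 'v"
  assumes rz: "rsum Z = 0" and bl: "bounded_linear L"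
    and sy: "\<And>a b. a \<bullet> L b = b \<bullet> L a" and ps: "\<And>a. 0 \<le> a \<bullet> L a"
  shows "2 * Bf Z (\<lambda>i. L (G Z i)) \<le> - (1 / h) * (\<Sum>i\<in>UNIV. Z i \<bullet> L (Z i))"
proof -
  have lin: "linear L" using bl by (rule bounded_linear.linear)
  define W where "W k = (act ^^ k) Z" for k
  define q where "q X = (\<Sum>i\<in>UNIV. X i \<bullet> L (X i))" for X :: "'p \<Rightarrow> 'v"
  have rLG: "rsum (\<lambda>i. L (G Z i)) = 0" using rsum_L[OF lin, of "G Z"] rsum_G[of Z] linear_0[OF lin] by simp
  have Gexp: "G Z = (\<lambda>i. (1/h) *\<^sub>R act Z i + (- (1/h)) *\<^sub>R Z i)"
    by (rule ext) (simp add: G_eq scaleR_diff_right)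
  have aG: "(act ^^ k) (\<lambda>i. L (G Z i)) j = (1/h) *\<^sub>R L (W (Suc k) j - W k j)" for k j
  proof -
    have g: "(act ^^ k) (G Z) j = (1/h) *\<^sub>R (W (Suc k) j - W k j)"
    proof -
      have "(act ^^ k) (G Z) j = (1/h) *\<^sub>R (act ^^ k) (act Z) j + (- (1/h)) *\<^sub>R (act ^^ k) Z j"
        unfolding Gexp by (rule act_pow_lin)
      also have "(act ^^ k) (act Z) = W (Suc k)" unfolding W_def by (simp only: funpow_Suc_right comp_apply)
      finally show ?thesis unfolding W_def by (simp add: scaleR_diff_right)
    qed
    have "(act ^^ k) (\<lambda>i. L (G Z i)) j = L ((act ^^ k) (G Z) j)" by (rule act_pow_L[OF lin])
    also have "\<dots> = (1/h) *\<^sub>R L (W (Suc k) j - W k j)" unfolding g by (rule linear_scale[OF lin])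
    finally show ?thesis .
  qed
  have pt: "a \<bullet> L (b - a) \<le> (b \<bullet> L b - a \<bullet> L a) / 2" for a b
  proof -
    have "0 \<le> (b - a) \<bullet> L (b - a)" by (rule ps)
    moreover have "(b - a) \<bullet> L (b - a) = b \<bullet> L b - 2 * (a \<bullet> L b) + a \<bullet> L a"
      using sy[of b a] by (simp add: linear_diff[OF lin] inner_diff_left inner_diff_right)
    moreover have "a \<bullet> L (b - a) = a \<bullet> L b - a \<bullet> L a"
      by (simp add: linear_diff[OF lin] inner_diff_right)
    ultimately show ?thesis by simp
  qed
  have trm: "ip (W k) ((act ^^ k) (\<lambda>i. L (G Z i))) \<le> (1 / (2 * h)) * (q (W (Suc k)) - q (W k))" for k
  proof -
    have "ip (W k) ((act ^^ k) (\<lambda>i. L (G Z i))) = (1/h) * (\<Sum>j\<in>UNIV. W k j \<bullet> L (W (Suc k) j - W k j))"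
      unfolding ip_def aG by (simp add: sum_distrib_left)
    also have "\<dots> \<le> (1/h) * (\<Sum>j\<in>UNIV. (W (Suc k) j \<bullet> L (W (Suc k) j) - W k j \<bullet> L (W k j)) / 2)"
      using h_pos by (intro mult_left_mono sum_mono pt) auto
    also have "\<dots> = (1 / (2 * h)) * (q (W (Suc k)) - q (W k))"
      unfolding q_def by (simp add: sum_divide_distrib[symmetric] sum_subtractf)
    finally show ?thesis .
  qed
  have part: "(\<Sum>k<N. ip (W k) ((act ^^ k) (\<lambda>i. L (G Z i)))) \<le> (1 / (2 * h)) * (q (W N) - q Z)" for N
  proof -
    have "(\<Sum>k<N. ip (W k) ((act ^^ k) (\<lambda>i. L (G Z i)))) \<le> (\<Sum>k<N. (1 / (2 * h)) * (q (W (Suc k)) - q (W k)))"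
      by (rule sum_mono) (rule trm)
    also have "\<dots> = (1 / (2 * h)) * (q (W N) - q (W 0))"
      by (subst sum_distrib_left[symmetric]) (simp only: sum_lessThan_telescope[of "\<lambda>k. q (W k)" N])
    finally show ?thesis unfolding W_def by simp
  qed
  have lim1: "(\<lambda>N. \<Sum>k<N. ip (W k) ((act ^^ k) (\<lambda>i. L (G Z i)))) \<longlonglongrightarrow> Bf Z (\<lambda>i. L (G Z i))"
    unfolding Bf_def W_def by (rule summable_LIMSEQ[OF summ_ip[OF rz rLG]])
  obtain K \<rho> m where K: "0 \<le> K" "0 < \<rho>" "\<rho> < 1" "0 < m"
    and dv: "\<And>k j (W :: 'p \<Rightarrow> 'v). rsum W = 0 \<Longrightarrow> norm ((act ^^ k) W j) \<le> K * \<rho> ^ (k div m) * nrm1 W"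
    by (rule decay_vec, rule that)
  obtain CL where CL: "\<And>x. norm (L x) \<le> norm x * CL" using bounded_linear.bounded[OF bl] by auto
  have r0: "(\<lambda>N. \<rho> ^ (N div m)) \<longlonglongrightarrow> 0" by (rule summable_LIMSEQ_zero[OF summable_pow_div]) (use K in auto)
  have qb: "norm (q (W N)) \<le> real CARD('p) * \<bar>CL\<bar> * (K * nrm1 Z)^2 * (\<rho> ^ (N div m) * \<rho> ^ (N div m))" for N
  proof -
    have "norm (q (W N)) \<le> (\<Sum>j\<in>UNIV. \<bar>W N j \<bullet> L (W N j)\<bar>)" unfolding q_def real_norm_def by (rule sum_abs)
    also have "\<dots> \<le> (\<Sum>j\<in>(UNIV::'p set). \<bar>CL\<bar> * (K * \<rho> ^ (N div m) * nrm1 Z)^2)"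
    proof (rule sum_mono)
      fix j
      have n: "norm (W N j) \<le> K * \<rho> ^ (N div m) * nrm1 Z" unfolding W_def by (rule dv[OF rz])
      have "\<bar>W N j \<bullet> L (W N j)\<bar> \<le> norm (W N j) * norm (L (W N j))" by (rule Cauchy_Schwarz_ineq2)
      also have "\<dots> \<le> norm (W N j) * (norm (W N j) * \<bar>CL\<bar>)"
      proof (rule mult_left_mono)
        have "norm (W N j) * CL \<le> norm (W N j) * \<bar>CL\<bar>" by (rule mult_left_mono) auto
        then show "norm (L (W N j)) \<le> norm (W N j) * \<bar>CL\<bar>" using CL[of "W N j"] by linarith
      qed simp
      also have "\<dots> = \<bar>CL\<bar> * (norm (W N j))^2" by (simp add: power2_eq_square mult_ac)
      also have "\<dots> \<le> \<bar>CL\<bar> * (K * \<rho> ^ (N div m) * nrm1 Z)^2"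
        by (intro mult_left_mono power_mono n) auto
      finally show "\<bar>W N j \<bullet> L (W N j)\<bar> \<le> \<bar>CL\<bar> * (K * \<rho> ^ (N div m) * nrm1 Z)^2" .
    qed
    also have "\<dots> = real CARD('p) * \<bar>CL\<bar> * (K * nrm1 Z)^2 * (\<rho> ^ (N div m) * \<rho> ^ (N div m))"
      by (simp add: power2_eq_square mult_ac)
    finally show ?thesis .
  qed
  have lim2: "(\<lambda>N. q (W N)) \<longlonglongrightarrow> 0"
  proof (rule Lim_null_comparison[OF always_eventually])
    show "\<forall>N. norm (q (W N)) \<le> real CARD('p) * \<bar>CL\<bar> * (K * nrm1 Z)^2 * (\<rho> ^ (N div m) * \<rho> ^ (N div m))"
      using qb by blast
    show "(\<lambda>N. real CARD('p) * \<bar>CL\<bar> * (K * nrm1 Z)^2 * (\<rho> ^ (N div m) * \<rho> ^ (N div m))) \<longlonglongrightarrow> 0"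
      by (rule tendsto_mult_right_zero) (rule tendsto_mult_zero[OF r0 r0])
  qed
  have lim3: "(\<lambda>N. (1 / (2 * h)) * (q (W N) - q Z)) \<longlonglongrightarrow> (1 / (2 * h)) * (0 - q Z)"
    by (intro tendsto_intros lim2)
  have "Bf Z (\<lambda>i. L (G Z i)) \<le> (1 / (2 * h)) * (0 - q Z)"
    by (rule LIMSEQ_le[OF lim1 lim3]) (use part in auto)
  then show ?thesis unfolding q_def using h_pos by (simp add: field_simps)
qed

end

lemma riem_int:
  fixes f :: "real \<Rightarrow> 'a::euclidean_space"
  assumes "riemann_integrable_on f a b"
  shows "f integrable_on {a..b}"
proof -
  obtain I where I: "\<And>e. e > 0 \<Longrightarrow> \<exists>d>0. \<forall>D. D tagged_division_of {a..b} \<and> (\<lambda>x. ball x d) fine D \<longrightarrow>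
        norm ((\<Sum>(x,K)\<in>D. Henstock_Kurzweil_Integration.content K *\<^sub>R f x) - I) < e"
    using assms unfolding riemann_integrable_on_def by blast
  have "(f has_integral I) (cbox a b)"
    unfolding has_integral
  proof (intro allI impI)
    fix e :: real assume e: "e > 0"
    obtain d where d: "d > 0" "\<forall>D. D tagged_division_of {a..b} \<and> (\<lambda>x. ball x d) fine D \<longrightarrow>
        norm ((\<Sum>(x,K)\<in>D. Henstock_Kurzweil_Integration.content K *\<^sub>R f x) - I) < e" using I[OF e] by blast
    show "\<exists>\<gamma>. gauge \<gamma> \<and> (\<forall>\<D>. \<D> tagged_division_of cbox a b \<and> \<gamma> fine \<D> \<longrightarrow>
             norm ((\<Sum>(x, k)\<in>\<D>. Henstock_Kurzweil_Integration.content k *\<^sub>R f x) - I) < e)"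
      using d by (intro exI[of _ "\<lambda>x. ball x d"]) (auto simp: gauge_ball)
  qed
  then show ?thesis by (auto simp: integrable_on_def)
qed

lemma Qbar_sym: "R \<in> Qbar \<Longrightarrow> x \<bullet> (R *v y) = y \<bullet> (R *v x)"
proof -
  assume "R \<in> Qbar"
  then have t: "transpose R = R" unfolding Qbar_def by auto
  have "x \<bullet> (R *v y) = (x v* R) \<bullet> y" by (simp add: dot_lmul_matrix)
  also have "x v* R = transpose R *v x" by (simp add: transpose_matrix_vector)
  finally show ?thesis using t by (simp add: inner_commute)
qed

lemma Qbar_psd: "R \<in> Qbar \<Longrightarrow> 0 \<le> x \<bullet> (R *v x)"
  unfolding Qbar_def by auto

lemma Qbar_norm: "R \<in> Qbar \<Longrightarrow> norm (R *v x) \<le> norm x"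
proof -
  assume "R \<in> Qbar"
  then have o: "onorm (\<lambda>x. R *v x) \<le> 1" unfolding Qbar_def by auto
  have "norm (R *v x) \<le> onorm (\<lambda>x. R *v x) * norm x"
    by (rule onorm) (simp add: matrix_vector_mul_bounded_linear)
  also have "\<dots> \<le> 1 * norm x" by (rule mult_right_mono[OF o]) simp
  finally show ?thesis by simp
qed

lemma bl_mv: "bounded_linear (\<lambda>M::real^'n^'m. M *v v)"
proof -
  have "linear (\<lambda>M::real^'n^'m. M *v v)"
    by (auto simp: linear_iff matrix_vector_mult_def vec_eq_iff sum.distrib algebra_simps sum_distrib_left)
  then show ?thesis by (simp add: linear_conv_bounded_linear)
qed

lemma bl_form: "bounded_linear (\<lambda>M::real^'n^'n. x \<bullet> (M *v y))"
  using bounded_linear_compose[OF bounded_linear_inner_right[of x] bl_mv[of y]] by (simp add: o_def)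

lemma hasint_mv:
  fixes Q :: "real \<Rightarrow> real^'n^'m"
  assumes "Q integrable_on S"
  shows "((\<lambda>u. Q u *v v) has_integral (integral S Q *v v)) S"
  using has_integral_linear[OF integrable_integral[OF assms] bl_mv, of v] by (simp add: o_def)

lemma hasint_form:
  fixes Q :: "real \<Rightarrow> real^'n^'n"
  assumes "Q integrable_on S"
  shows "((\<lambda>u. x \<bullet> (Q u *v y)) has_integral (x \<bullet> (integral S Q *v y))) S"
  using has_integral_linear[OF integrable_integral[OF assms] bl_form, of x y] by (simp add: o_def)

definition msym :: "real^'n^'n \<Rightarrow> bool" where "msym S \<longleftrightarrow> (\<forall>x y. x \<bullet> (S *v y) = y \<bullet> (S *v x))"
definition mpsd :: "real^'n^'n \<Rightarrow> bool" where "mpsd S \<longleftrightarrow> (\<forall>x. 0 \<le> x \<bullet> (S *v x))"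

lemma quad_disc:
  fixes A B C :: real
  assumes q: "\<And>t. 0 \<le> A + 2 * C * t + B * t^2" and B0: "0 \<le> B"
  shows "C^2 \<le> A * B"
proof (cases "B = 0")
  case True
  show ?thesis
  proof (cases "C = 0")
    case True then show ?thesis using \<open>B = 0\<close> by simp
  next
    case False
    have "0 \<le> A + 2 * C * (- (A + 1) / (2 * C)) + B * (- (A + 1) / (2 * C))^2" by (rule q)
    then show ?thesis using False \<open>B = 0\<close> by (simp add: field_simps)
  qed
next
  case False
  then have Bp: "0 < B" using B0 by simp
  have "0 \<le> A + 2 * C * (- C / B) + B * (- C / B)^2" by (rule q)
  then have "0 \<le> A - C^2 / B" using Bp by (simp add: field_simps power2_eq_square)
  then show ?thesis using Bp by (simp add: field_simps)
qed

lemma psd_expand: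
  assumes s: "msym S"
  shows "(a + t *\<^sub>R b) \<bullet> (S *v (a + t *\<^sub>R b)) = a \<bullet> (S *v a) + 2 * (a \<bullet> (S *v b)) * t + (b \<bullet> (S *v b)) * t^2"
  using s unfolding msym_def
  by (simp add: matrix_vector_right_distrib matrix_vector_mult_scaleR inner_add_left inner_add_right power2_eq_square algebra_simps)

lemma psd_cs:
  assumes s: "msym S" and p: "mpsd S"
  shows "(a \<bullet> (S *v b))^2 \<le> (a \<bullet> (S *v a)) * (b \<bullet> (S *v b))"
proof (rule quad_disc)
  fix t
  show "0 \<le> a \<bullet> (S *v a) + 2 * (a \<bullet> (S *v b)) * t + (b \<bullet> (S *v b)) * t^2"
    using p psd_expand[OF s, of a t b] unfolding mpsd_def by metis
  show "0 \<le> b \<bullet> (S *v b)" using p unfolding mpsd_def by blast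
qed

lemma psd_cross:
  assumes s: "msym S" and p: "mpsd S"
  shows "2 * \<bar>a \<bullet> (S *v b)\<bar> \<le> a \<bullet> (S *v a) + b \<bullet> (S *v b)"
proof -
  have "0 \<le> a \<bullet> (S *v a) + 2 * (a \<bullet> (S *v b)) * 1 + (b \<bullet> (S *v b)) * 1^2"
    using p psd_expand[OF s, of a 1 b] unfolding mpsd_def by metis
  moreover have "0 \<le> a \<bullet> (S *v a) + 2 * (a \<bullet> (S *v b)) * (-1) + (b \<bullet> (S *v b)) * (-1)^2"
    using p psd_expand[OF s, of a "-1" b] unfolding mpsd_def by metis
  ultimately show ?thesis by (simp add: abs_if)
qed

lemma psd_norm:
  assumes s: "msym S" and p: "mpsd S" and w: "\<And>v. v \<bullet> (S *v v) \<le> w * (norm v)^2" and w0: "0 \<le> w"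
  shows "(norm (S *v z))^2 \<le> w * (z \<bullet> (S *v z))"
proof -
  define u where "u = S *v z"
  have uu: "(norm u)^2 = z \<bullet> (S *v u)"
    using s unfolding msym_def u_def by (simp add: power2_norm_eq_inner)
  have "((norm u)^2)^2 \<le> (z \<bullet> (S *v z)) * (u \<bullet> (S *v u))"
    unfolding uu by (rule psd_cs[OF s p])
  also have "\<dots> \<le> (z \<bullet> (S *v z)) * (w * (norm u)^2)"
    by (rule mult_left_mono[OF w]) (use p in \<open>simp add: mpsd_def\<close>)
  finally have *: "(norm u)^2 * (norm u)^2 \<le> (w * (z \<bullet> (S *v z))) * (norm u)^2"
    by (simp add: power2_eq_square mult_ac)
  show ?thesis
  proof (cases "norm u = 0")
    case True then show ?thesis using w0 p unfolding u_def mpsd_def by simp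
  next
    case False
    then have pos: "0 < (norm u)^2" by simp
    have "(norm u)^2 \<le> w * (z \<bullet> (S *v z))" using * mult_le_cancel_right_pos[OF pos] by blast
    then show ?thesis unfolding u_def .
  qed
qed

lemma sigma_min_le:
  fixes S :: "real^'n^'n"
  assumes "\<epsilon> \<le> sigma_min S" "norm v = 1"
  shows "\<epsilon> \<le> norm (S *v v)"
proof -
  have "sigma_min S \<le> norm (S *v v)" unfolding sigma_min_def
    by (rule cInf_lower) (use assms(2) in \<open>auto simp: bdd_below_def intro: exI[of _ 0]\<close>)
  then show ?thesis using assms(1) by simp
qed

lemma spectral_lb:
  fixes S :: "real^'n^'n"
  assumes s: "msym S" and p: "mpsd S" and e: "\<And>v. norm v = 1 \<Longrightarrow> \<epsilon> \<le> norm (S *v v)"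
  shows "\<epsilon> * (norm y)^2 \<le> y \<bullet> (S *v y)"
proof -
  define \<phi> where "\<phi> v = v \<bullet> (S *v v)" for v :: "real^'n"
  have cont: "continuous_on (sphere 0 1) \<phi>" unfolding \<phi>_def
    by (intro continuous_on_inner continuous_on_id bounded_linear.continuous_on[OF matrix_vector_mul_bounded_linear])
  have "(axis undefined (1::real) :: real^'n) \<in> sphere 0 1" by (simp add: norm_axis_1)
  then have ne: "sphere (0::real^'n) 1 \<noteq> {}" by blast
  obtain v0 where v0: "v0 \<in> sphere 0 1" and mn: "\<And>y. y \<in> sphere 0 1 \<Longrightarrow> \<phi> v0 \<le> \<phi> y"
    using continuous_attains_inf[OF compact_sphere ne cont] by blast
  have nv0: "norm v0 = 1" using v0 by simp
  define m where "m = \<phi> v0"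
  have scale: "\<phi> (c *\<^sub>R v) = c^2 * \<phi> v" for c v
    unfolding \<phi>_def by (simp add: matrix_vector_mult_scaleR power2_eq_square)
  have lb: "m * (norm y)^2 \<le> \<phi> y" for y
  proof (cases "y = 0")
    case True then show ?thesis unfolding \<phi>_def by simp
  next
    case False
    have "m \<le> \<phi> ((1 / norm y) *\<^sub>R y)" unfolding m_def by (rule mn) (use False in simp)
    also have "\<dots> = \<phi> y / (norm y)^2" by (simp add: scale power_divide)
    finally show ?thesis using False by (simp add: field_simps)
  qed
  define w where "w = S *v v0 - m *\<^sub>R v0"
  have "\<forall>t. 0 \<le> 0 + 2 * (w \<bullet> w) * t + (\<phi> w - m * (norm w)^2) * t^2"
  proof
    fix t :: real
    have "m * (norm (v0 + t *\<^sub>R w))^2 \<le> \<phi> (v0 + t *\<^sub>R w)" by (rule lb)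
    moreover have "\<phi> (v0 + t *\<^sub>R w) = m + 2 * (v0 \<bullet> (S *v w)) * t + \<phi> w * t^2"
      unfolding \<phi>_def m_def using psd_expand[OF s, of v0 t w] by simp
    moreover have "(norm (v0 + t *\<^sub>R w))^2 = 1 + 2 * (v0 \<bullet> w) * t + (norm w)^2 * t^2"
    proof -
      have vv: "v0 \<bullet> v0 = 1" using nv0 power2_norm_eq_inner[of v0] by simp
      have "(norm (v0 + t *\<^sub>R w))^2 = (v0 + t *\<^sub>R w) \<bullet> (v0 + t *\<^sub>R w)" by (rule power2_norm_eq_inner)
      also have "\<dots> = v0 \<bullet> v0 + 2 * (v0 \<bullet> w) * t + (w \<bullet> w) * t^2"
        by (simp add: inner_add_left inner_add_right inner_commute algebra_simps power2_eq_square)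
      finally show ?thesis using vv power2_norm_eq_inner[of w] by simp
    qed
    moreover have "v0 \<bullet> (S *v w) = w \<bullet> (S *v v0)" using s unfolding msym_def by blast
    moreover have "w \<bullet> (S *v v0) - m * (v0 \<bullet> w) = w \<bullet> w"
      unfolding w_def by (simp add: inner_diff_left inner_diff_right inner_commute algebra_simps)
    ultimately show "0 \<le> 0 + 2 * (w \<bullet> w) * t + (\<phi> w - m * (norm w)^2) * t^2"
      by (simp add: algebra_simps)
  qed
  moreover have "0 \<le> \<phi> w - m * (norm w)^2" using lb[of w] by simp
  ultimately have "(w \<bullet> w)^2 \<le> 0 * (\<phi> w - m * (norm w)^2)" by (intro quad_disc) blast+
  then have "w = 0" by simp
  then have Sv0: "S *v v0 = m *\<^sub>R v0" unfolding w_def by simp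
  have m0: "0 \<le> m" using p unfolding m_def \<phi>_def mpsd_def by blast
  have "\<epsilon> \<le> norm (S *v v0)" by (rule e[OF nv0])
  also have "\<dots> = m" using Sv0 nv0 m0 by simp
  finally have "\<epsilon> \<le> m" .
  then have "\<epsilon> * (norm y)^2 \<le> m * (norm y)^2" by (intro mult_right_mono) auto
  also have "\<dots> \<le> \<phi> y" by (rule lb)
  finally show ?thesis unfolding \<phi>_def .
qed

definition qS :: "real^'n^'n \<Rightarrow> ('p::finite \<Rightarrow> real^'n) \<Rightarrow> real" where
  "qS S W = (\<Sum>i\<in>UNIV. W i \<bullet> (S *v W i))"
definition nrm2 :: "('p::finite \<Rightarrow> real^'n) \<Rightarrow> real" where
  "nrm2 W = (\<Sum>i\<in>UNIV. (norm (W i))^2)"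

lemma nrm2_nonneg: "0 \<le> nrm2 W" unfolding nrm2_def by (simp add: sum_nonneg)

lemma qS_nonneg: "mpsd S \<Longrightarrow> 0 \<le> qS S W"
  unfolding qS_def mpsd_def by (simp add: sum_nonneg)

lemma qS_split:
  assumes s: "msym S" and p: "mpsd S"
  shows "qS S X \<le> 2 * qS S Z + 2 * qS S (\<lambda>i. X i - Z i)"
proof -
  have "X i \<bullet> (S *v X i) \<le> 2 * (Z i \<bullet> (S *v Z i)) + 2 * ((X i - Z i) \<bullet> (S *v (X i - Z i)))" for i
  proof -
    have "X i \<bullet> (S *v X i) = (Z i + 1 *\<^sub>R (X i - Z i)) \<bullet> (S *v (Z i + 1 *\<^sub>R (X i - Z i)))" by simp
    also have "\<dots> = Z i \<bullet> (S *v Z i) + 2 * (Z i \<bullet> (S *v (X i - Z i))) * 1 + ((X i - Z i) \<bullet> (S *v (X i - Z i))) * 1^2"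
      by (rule psd_expand[OF s])
    finally show ?thesis using psd_cross[OF s p, of "Z i" "X i - Z i"] by simp
  qed
  then show ?thesis unfolding qS_def by (simp add: sum_distrib_left sum.distrib[symmetric] sum_mono)
qed

lemma qS_le:
  assumes "\<And>v. v \<bullet> (S *v v) \<le> w * (norm v)^2"
  shows "qS S W \<le> w * nrm2 W"
  unfolding qS_def nrm2_def sum_distrib_left by (rule sum_mono) (rule assms)

lemma qS_add: "qS (S1 + S2) W = qS S1 W + qS S2 W"
  unfolding qS_def by (simp add: matrix_vector_mult_add_rdistrib inner_add_right sum.distrib)

lemma qS_sum: "qS (\<Sum>k\<in>K. S k) W = (\<Sum>k\<in>K. qS (S k) W)"
proof (induction K rule: infinite_finite_induct)
  case (infinite A) then show ?case by (simp add: qS_def)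
next
  case empty then show ?case by (simp add: qS_def)
next
  case (insert k F) then show ?case by (simp add: qS_add)
qed

lemma psd_comb:
  fixes c :: "'p::finite \<Rightarrow> real" and z :: "'p \<Rightarrow> real^'n"
  assumes s: "msym S" and p: "mpsd S"
  shows "(\<Sum>j\<in>UNIV. c j *\<^sub>R z j) \<bullet> (S *v (\<Sum>j\<in>UNIV. c j *\<^sub>R z j)) \<le> (\<Sum>j\<in>UNIV. \<bar>c j\<bar>) * (\<Sum>j\<in>UNIV. \<bar>c j\<bar> * (z j \<bullet> (S *v z j)))"
proof -
  define q where "q j = z j \<bullet> (S *v z j)" for j
  have "(\<Sum>j\<in>UNIV. c j *\<^sub>R z j) \<bullet> (S *v (\<Sum>j\<in>UNIV. c j *\<^sub>R z j)) = (\<Sum>j\<in>UNIV. \<Sum>l\<in>UNIV. c j * c l * (z j \<bullet> (S *v z l)))"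
    apply (simp add: inner_sum_left inner_sum_right vec.sum matrix_vector_mult_scaleR sum_distrib_left mult_ac)
    apply (subst sum.swap)
    apply (simp add: mult_ac)
    done
  also have "\<dots> \<le> (\<Sum>j\<in>UNIV. \<Sum>l\<in>UNIV. \<bar>c j\<bar> * \<bar>c l\<bar> * ((q j + q l) / 2))"
  proof (intro sum_mono)
    fix j l
    have "c j * c l * (z j \<bullet> (S *v z l)) \<le> \<bar>c j * c l\<bar> * \<bar>z j \<bullet> (S *v z l)\<bar>"
      by (metis abs_ge_self abs_mult)
    also have "\<dots> \<le> \<bar>c j\<bar> * \<bar>c l\<bar> * ((q j + q l) / 2)"
    proof -
      have "\<bar>c j\<bar> * \<bar>c l\<bar> * (2 * \<bar>z j \<bullet> (S *v z l)\<bar>) \<le> \<bar>c j\<bar> * \<bar>c l\<bar> * (q j + q l)"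
        by (rule mult_left_mono) (use psd_cross[OF s p, of "z j" "z l"] in \<open>auto simp: q_def\<close>)
      then show ?thesis by (simp add: abs_mult)
    qed
    finally show "c j * c l * (z j \<bullet> (S *v z l)) \<le> \<bar>c j\<bar> * \<bar>c l\<bar> * ((q j + q l) / 2)" .
  qed
  also have "\<dots> = ((\<Sum>j\<in>UNIV. \<Sum>l\<in>UNIV. \<bar>c j\<bar> * \<bar>c l\<bar> * q j) + (\<Sum>j\<in>UNIV. \<Sum>l\<in>UNIV. \<bar>c j\<bar> * \<bar>c l\<bar> * q l)) / 2"
    by (simp add: distrib_left add_divide_distrib sum.distrib sum_divide_distrib)
  also have "(\<Sum>j\<in>UNIV. \<Sum>l\<in>UNIV. \<bar>c j\<bar> * \<bar>c l\<bar> * q l) = (\<Sum>l\<in>UNIV. \<Sum>j\<in>UNIV. \<bar>c j\<bar> * \<bar>c l\<bar> * q l)"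
    by (rule sum.swap)
  also have "\<dots> = (\<Sum>j\<in>UNIV. \<Sum>l\<in>UNIV. \<bar>c j\<bar> * \<bar>c l\<bar> * q j)"
    by (simp add: mult.commute)
  also have "((\<Sum>j\<in>UNIV. \<Sum>l\<in>UNIV. \<bar>c j\<bar> * \<bar>c l\<bar> * q j) + (\<Sum>j\<in>UNIV. \<Sum>l\<in>UNIV. \<bar>c j\<bar> * \<bar>c l\<bar> * q j)) / 2
      = (\<Sum>l\<in>UNIV. \<bar>c l\<bar>) * (\<Sum>j\<in>UNIV. \<bar>c j\<bar> * q j)"
    by (simp add: sum_distrib_left sum_distrib_right mult_ac)
  finally show ?thesis unfolding q_def .
qed

lemma int_bound_real:
  fixes f :: "real \<Rightarrow> 'a::real_normed_vector"
  assumes "(f has_integral I) {s..t}" "s \<le> t" "0 \<le> B" "\<And>u. u \<in> {s..t} \<Longrightarrow> norm (f u) \<le> B"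
  shows "norm I \<le> B * (t - s)"
  using has_integral_bound_real[of B "{}" f I s t] assms by (simp add: content_real)

locale sysm = agents \<gamma> r for \<gamma> :: "'p::finite \<Rightarrow> 'p \<Rightarrow> real" and r +
  fixes Q :: "real \<Rightarrow> real^'n^'n" and x :: "'p \<Rightarrow> real \<Rightarrow> real^'n"
  assumes Qbar: "\<And>t. 0 \<le> t \<Longrightarrow> Q t \<in> Qbar"
    and Qriem: "\<And>a b. 0 \<le> a \<Longrightarrow> a \<le> b \<Longrightarrow> riemann_integrable_on Q a b"
    and sol: "\<And>i t. 0 \<le> t \<Longrightarrow>
       ((\<lambda>s. Q s *v (\<Sum>j\<in>UNIV - {i}. \<gamma> i j *\<^sub>R (x j s - x i s))) has_integral (x i t - x i 0)) {0..t}"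
begin

definition xbar :: "real^'n" where "xbar = (\<Sum>j\<in>UNIV. r j *\<^sub>R x j 0)"
definition Y :: "real \<Rightarrow> 'p \<Rightarrow> real^'n" where "Y t = (\<lambda>i. x i t - xbar)"
definition g0 :: real where "g0 = (\<Sum>i\<in>UNIV. \<Sum>j\<in>UNIV. \<bar>\<gamma> i j\<bar>)"
definition pp :: real where "pp = real CARD('p)"

lemma g0_nonneg: "0 \<le> g0" unfolding g0_def by (simp add: sum_nonneg)
lemma pp_pos: "0 < pp" unfolding pp_def by simp

lemma gamma_le_g0: "\<bar>\<gamma> i j\<bar> \<le> g0"
proof -
  have "\<bar>\<gamma> i j\<bar> \<le> (\<Sum>j\<in>UNIV. \<bar>\<gamma> i j\<bar>)" by (rule member_le_sum) auto
  also have "\<dots> \<le> g0" unfolding g0_def by (rule member_le_sum[of i]) (auto simp: sum_nonneg)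
  finally show ?thesis .
qed

lemma rowsum_le_g0: "(\<Sum>j\<in>UNIV. \<bar>\<gamma> i j\<bar>) \<le> g0"
  unfolding g0_def by (rule member_le_sum[of i]) (auto simp: sum_nonneg)

lemma normG: "norm (G W i) \<le> g0 * nrm1 W"
proof -
  have "norm (G W i) \<le> (\<Sum>j\<in>UNIV. \<bar>\<gamma> i j\<bar> * norm (W j))"
    unfolding G_def by (rule order_trans[OF norm_sum]) simp
  also have "\<dots> \<le> (\<Sum>j\<in>UNIV. g0 * norm (W j))"
    by (rule sum_mono) (simp add: mult_right_mono gamma_le_g0)
  finally show ?thesis by (simp add: nrm1_def sum_distrib_left)
qed

lemma G_diff: "G (\<lambda>j. U j - V j) i = G U i - G V i"
  unfolding G_def by (simp add: scaleR_diff_right sum_subtractf)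

lemma F_eq: "(\<Sum>j\<in>UNIV - {i}. \<gamma> i j *\<^sub>R (x j s - x i s)) = G (Y s) i"
proof -
  have gi: "\<gamma> i i = - (\<Sum>j\<in>UNIV - {i}. \<gamma> i j)" using \<Gamma> unfolding interconnection_def by auto
  have e1: "G (Y s) i = \<gamma> i i *\<^sub>R (x i s - xbar) + (\<Sum>j\<in>UNIV - {i}. \<gamma> i j *\<^sub>R (x j s - xbar))"
    unfolding G_def Y_def by (simp add: sum.remove[of UNIV i])
  have "\<gamma> i i *\<^sub>R (x i s - xbar) = - (\<Sum>j\<in>UNIV - {i}. \<gamma> i j *\<^sub>R (x i s - xbar))"
    unfolding gi by (simp add: scaleR_sum_left)
  note e1 this
  moreover have "(\<Sum>j\<in>UNIV - {i}. \<gamma> i j *\<^sub>R (x j s - x i s)) =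
      (\<Sum>j\<in>UNIV - {i}. \<gamma> i j *\<^sub>R (x j s - xbar)) - (\<Sum>j\<in>UNIV - {i}. \<gamma> i j *\<^sub>R (x i s - xbar))"
    unfolding sum_subtractf[symmetric] by (rule sum.cong) (auto simp: scaleR_diff_right)
  ultimately show ?thesis by simp
qed

lemma Qint: "0 \<le> a \<Longrightarrow> a \<le> b \<Longrightarrow> Q integrable_on {a..b}"
  by (rule riem_int[OF Qriem])

lemma Q_sym: assumes "0 \<le> u" shows "v \<bullet> (Q u *v w) = w \<bullet> (Q u *v v)"
  by (rule Qbar_sym[OF Qbar[OF assms]])

lemma Q_psd: assumes "0 \<le> u" shows "0 \<le> v \<bullet> (Q u *v v)"
  by (rule Qbar_psd[OF Qbar[OF assms]])

lemma Q_norm: assumes "0 \<le> u" shows "norm (Q u *v v) \<le> norm v"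
  by (rule Qbar_norm[OF Qbar[OF assms]])

lemma sol0: "0 \<le> t \<Longrightarrow> ((\<lambda>u. Q u *v G (Y u) i) has_integral (Y t i - Y 0 i)) {0..t}"
  using sol[of t i] by (simp add: F_eq Y_def)

lemma fint:
  assumes "0 \<le> s" "s \<le> t"
  shows "((\<lambda>u. Q u *v G (Y u) i) has_integral (Y t i - Y s i)) {s..t}"
proof -
  define f where "f u = Q u *v G (Y u) i" for u
  have it: "f integrable_on {0..t}" using sol0[of t i] assms unfolding f_def by (auto simp: integrable_on_def)
  have "integral {0..s} f + integral {s..t} f = integral {0..t} f"
    by (rule Henstock_Kurzweil_Integration.integral_combine) (use assms it in auto)
  moreover have "integral {0..t} f = Y t i - Y 0 i" using sol0[of t i] assms unfolding f_def
    by (auto intro: integral_unique)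
  moreover have "integral {0..s} f = Y s i - Y 0 i" using sol0[of s i] assms unfolding f_def
    by (auto intro: integral_unique)
  moreover have "f integrable_on {s..t}" by (rule integrable_subinterval_real[OF it]) (use assms in auto)
  ultimately have "f integrable_on {s..t} \<and> integral {s..t} f = Y t i - Y s i"
    by (simp add: algebra_simps)
  then show ?thesis unfolding f_def has_integral_integrable_integral by blast
qed

lemma rsumY: "0 \<le> t \<Longrightarrow> rsum (Y t) = 0"
proof -
  assume t: "0 \<le> t"
  have h: "((\<lambda>u. \<Sum>i\<in>UNIV. r i *\<^sub>R (Q u *v G (Y u) i)) has_integral (\<Sum>i\<in>UNIV. r i *\<^sub>R (Y t i - Y 0 i))) {0..t}"
    by (intro has_integral_sum has_integral_cmul sol0 t) auto
  have z: "(\<lambda>u. \<Sum>i\<in>UNIV. r i *\<^sub>R (Q u *v G (Y u) i)) = (\<lambda>u. 0)"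
  proof
    fix u
    have "(\<Sum>i\<in>UNIV. r i *\<^sub>R (Q u *v G (Y u) i)) = Q u *v rsum (G (Y u))"
      unfolding rsum_def by (simp add: vec.sum matrix_vector_mult_scaleR)
    then show "(\<Sum>i\<in>UNIV. r i *\<^sub>R (Q u *v G (Y u) i)) = 0" by (simp add: rsum_G)
  qed
  have "(\<Sum>i\<in>UNIV. r i *\<^sub>R (Y t i - Y 0 i)) = 0"
    using h unfolding z by (auto intro: has_integral_unique[OF _ has_integral_0])
  then have "rsum (Y t) = rsum (Y 0)" unfolding rsum_def by (simp add: scaleR_diff_right sum_subtractf)
  also have "rsum (Y 0) = 0" unfolding rsum_def Y_def xbar_def
    by (simp add: scaleR_diff_right sum_subtractf scaleR_sum_left[symmetric] r_sum)
  finally show ?thesis .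
qed

lemma Y_cont:
  assumes "0 \<le> b"
  shows "continuous_on {0..b} (\<lambda>t. Y t i)"
proof -
  define f where "f u = Q u *v G (Y u) i" for u
  have it: "f integrable_on {0..b}" using sol0[of b i] assms unfolding f_def by (auto simp: integrable_on_def)
  have c: "continuous_on {0..b} (\<lambda>t. Y 0 i + integral {0..t} f)"
    by (intro continuous_intros indefinite_integral_continuous_1 it)
  have "Y t i = Y 0 i + integral {0..t} f" if "t \<in> {0..b}" for t
    using sol0[of t i] that unfolding f_def by (auto dest: integral_unique)
  then show ?thesis using continuous_on_cong[OF refl] c by (metis (no_types, lifting))
qed

lemma Y_bound:
  assumes "0 \<le> b"
  obtains M where "0 \<le> M" "\<And>t. t \<in> {0..b} \<Longrightarrow> nrm1 (Y t) \<le> M"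
proof -
  have c: "continuous_on {0..b} (\<lambda>t. nrm1 (Y t))" unfolding nrm1_def
    by (intro continuous_on_sum continuous_on_norm Y_cont assms)
  have "bounded ((\<lambda>t. nrm1 (Y t)) ` {0..b})"
    by (rule compact_imp_bounded[OF compact_continuous_image[OF c compact_Icc]])
  then obtain B where B: "\<And>t. t \<in> {0..b} \<Longrightarrow> norm (nrm1 (Y t)) \<le> B" unfolding bounded_iff by blast
  show ?thesis
  proof (rule that[of "max B 0"])
    show "0 \<le> max B 0" by simp
    fix t assume "t \<in> {0..b}"
    then show "nrm1 (Y t) \<le> max B 0" using B[of t] by simp
  qed
qed

lemma Y_lip:
  assumes "0 \<le> s" "s \<le> t" "t \<le> b" "0 \<le> M" and M: "\<And>u. u \<in> {0..b} \<Longrightarrow> nrm1 (Y u) \<le> M"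
  shows "norm (Y t i - Y s i) \<le> g0 * M * (t - s)"
proof (rule int_bound_real[OF fint[OF assms(1,2)] assms(2)])
  show "0 \<le> g0 * M" using g0_nonneg assms by simp
  fix u assume u: "u \<in> {s..t}"
  have "norm (Q u *v G (Y u) i) \<le> norm (G (Y u) i)" by (rule Q_norm) (use u assms in auto)
  also have "\<dots> \<le> g0 * nrm1 (Y u)" by (rule normG)
  also have "\<dots> \<le> g0 * M" by (rule mult_left_mono[OF M g0_nonneg]) (use u assms in auto)
  finally show "norm (Q u *v G (Y u) i) \<le> g0 * M" .
qed

lemma Y_lip1:
  assumes "0 \<le> s" "s \<le> t" "t \<le> b" "0 \<le> M" and M: "\<And>u. u \<in> {0..b} \<Longrightarrow> nrm1 (Y u) \<le> M"
  shows "nrm1 (\<lambda>i. Y t i - Y s i) \<le> pp * g0 * M * (t - s)"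
proof -
  have "nrm1 (\<lambda>i. Y t i - Y s i) \<le> (\<Sum>i\<in>(UNIV::'p set). g0 * M * (t - s))"
    unfolding nrm1_def by (rule sum_mono) (rule Y_lip[OF assms])
  then show ?thesis by (simp add: pp_def mult_ac)
qed

lemma decomp:
  assumes s0: "0 \<le> s" and st: "s \<le> t" and tb: "t \<le> b" and M0: "0 \<le> M" and M: "\<And>u. u \<in> {0..b} \<Longrightarrow> nrm1 (Y u) \<le> M"
  shows "norm (Y t i - Y s i - integral {s..t} Q *v G (Y s) i) \<le> (g0 * pp * g0 * M) * (t - s)^2"
proof -
  have h1: "((\<lambda>u. Q u *v G (Y u) i - Q u *v G (Y s) i) has_integral (Y t i - Y s i - integral {s..t} Q *v G (Y s) i)) {s..t}"
    by (rule has_integral_diff[OF fint[OF s0 st] hasint_mv[OF Qint[OF s0 st]]])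
  show ?thesis
  proof -
    have "norm (Y t i - Y s i - integral {s..t} Q *v G (Y s) i) \<le> (g0 * (pp * g0 * M * (t - s))) * (t - s)"
    proof (rule int_bound_real[OF h1 st])
      show "0 \<le> g0 * (pp * g0 * M * (t - s))" using g0_nonneg pp_pos M0 st by simp
      fix u assume u: "u \<in> {s..t}"
      have "norm (Q u *v G (Y u) i - Q u *v G (Y s) i) = norm (Q u *v G (\<lambda>j. Y u j - Y s j) i)"
        by (simp add: G_diff matrix_vector_mult_diff_distrib)
      also have "\<dots> \<le> norm (G (\<lambda>j. Y u j - Y s j) i)" by (rule Q_norm) (use u s0 in auto)
      also have "\<dots> \<le> g0 * nrm1 (\<lambda>j. Y u j - Y s j)" by (rule normG)
      also have "\<dots> \<le> g0 * (pp * g0 * M * (u - s))"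
        by (rule mult_left_mono[OF Y_lip1 g0_nonneg]) (use u s0 st tb M0 M in auto)
      also have "\<dots> \<le> g0 * (pp * g0 * M * (t - s))"
        using u g0_nonneg pp_pos M0 by (intro mult_left_mono mult_left_mono) (auto simp: mult_nonneg_nonneg)
      finally show "norm (Q u *v G (Y u) i - Q u *v G (Y s) i) \<le> g0 * (pp * g0 * M * (t - s))" .
    qed
    then show ?thesis by (simp add: power2_eq_square mult_ac)
  qed
qed

end

context sysm begin

definition CBc :: real where
  "CBc = (SOME CB. 0 \<le> CB \<and> (\<forall>W U :: 'p \<Rightarrow> real^'n. rsum W = 0 \<longrightarrow> rsum U = 0 \<longrightarrow> \<bar>Bf W U\<bar> \<le> CB * nrm1 W * nrm1 U))"

lemma CBc: "0 \<le> CBc \<and> (\<forall>W U :: 'p \<Rightarrow> real^'n. rsum W = 0 \<longrightarrow> rsum U = 0 \<longrightarrow> \<bar>Bf W U\<bar> \<le> CBc * nrm1 W * nrm1 U)"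
proof -
  obtain CB where c0: "0 \<le> CB" and bd: "\<And>W U :: 'p \<Rightarrow> real^'n. rsum W = 0 \<Longrightarrow> rsum U = 0 \<Longrightarrow> \<bar>Bf W U\<bar> \<le> CB * nrm1 W * nrm1 U"
    by (rule Bf_bound, rule that)
  have "\<exists>CB. 0 \<le> CB \<and> (\<forall>W U :: 'p \<Rightarrow> real^'n. rsum W = 0 \<longrightarrow> rsum U = 0 \<longrightarrow> \<bar>Bf W U\<bar> \<le> CB * nrm1 W * nrm1 U)"
    using c0 bd by blast
  then show ?thesis unfolding CBc_def by (rule someI_ex)
qed

lemma CBc0: "0 \<le> CBc" using CBc by blast
lemma CBc_bd: "rsum W = 0 \<Longrightarrow> rsum U = 0 \<Longrightarrow> \<bar>Bf W U\<bar> \<le> CBc * nrm1 W * nrm1 (U :: 'p \<Rightarrow> real^'n)"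
  using CBc by blast

lemma S_sym:
  assumes "0 \<le> a" "a \<le> b"
  shows "msym (integral {a..b} Q)"
  unfolding msym_def
proof (intro allI)
  fix v w :: "real^'n"
  have h1: "((\<lambda>u. v \<bullet> (Q u *v w)) has_integral (v \<bullet> (integral {a..b} Q *v w))) {a..b}"
    by (rule hasint_form[OF Qint[OF assms]])
  have h2: "((\<lambda>u. w \<bullet> (Q u *v v)) has_integral (w \<bullet> (integral {a..b} Q *v v))) {a..b}"
    by (rule hasint_form[OF Qint[OF assms]])
  have h3: "((\<lambda>u. v \<bullet> (Q u *v w)) has_integral (w \<bullet> (integral {a..b} Q *v v))) {a..b}"
    by (rule has_integral_eq[OF _ h2]) (use assms Q_sym in auto)
  show "v \<bullet> (integral {a..b} Q *v w) = w \<bullet> (integral {a..b} Q *v v)"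
    by (rule has_integral_unique[OF h1 h3])
qed

lemma S_psd:
  assumes "0 \<le> a" "a \<le> b"
  shows "mpsd (integral {a..b} Q)"
  unfolding mpsd_def
proof
  fix v :: "real^'n"
  show "0 \<le> v \<bullet> (integral {a..b} Q *v v)"
    by (rule has_integral_nonneg[OF hasint_form[OF Qint[OF assms]]]) (use assms Q_psd in auto)
qed

lemma S_bnd:
  assumes "0 \<le> a" "a \<le> b"
  shows "v \<bullet> (integral {a..b} Q *v v) \<le> (b - a) * (norm v)^2"
proof -
  have "v \<bullet> (integral {a..b} Q *v v) \<le> Henstock_Kurzweil_Integration.content {a..b} *\<^sub>R (norm v)^2"
  proof (rule has_integral_le[OF hasint_form[OF Qint[OF assms]] has_integral_const_real])
    fix u assume u: "u \<in> {a..b}"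
    have "v \<bullet> (Q u *v v) \<le> norm v * norm (Q u *v v)" by (rule norm_cauchy_schwarz)
    also have "\<dots> \<le> norm v * norm v" by (rule mult_left_mono[OF Q_norm]) (use u assms in auto)
    finally show "v \<bullet> (Q u *v v) \<le> (norm v)^2" by (simp add: power2_eq_square)
  qed
  then show ?thesis using assms by (simp add: content_real)
qed

lemma rsum_diff: "rsum (\<lambda>i. U i - V i) = rsum U - rsum V"
  using rsum_lin[of 1 U "-1" V] by simp

lemma rsum_S: fixes S :: "real^'n^'n" and W :: "'p \<Rightarrow> real^'n" shows "rsum (\<lambda>i. S *v W i) = S *v rsum W"
  using rsum_L[of "(*v) S" W] matrix_vector_mul_linear[of S] by simp

definition VV :: "('p \<Rightarrow> real^'n) \<Rightarrow> real" where "VV W = Bf W W"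

lemma local_est:
  assumes s0: "0 \<le> s" and st: "s \<le> t" and tb: "t \<le> b" and M0: "0 \<le> M" and M: "\<And>u. u \<in> {0..b} \<Longrightarrow> nrm1 (Y u) \<le> M"
  shows "VV (Y t) \<le> VV (Y s) - (1/h) * qS (integral {s..t} Q) (Y s)
     + (2 * CBc * M * pp * (g0 * pp * g0 * M) + CBc * (pp * g0 * M)^2) * (t - s)^2"
proof -
  define X where "X = Y s"
  define S where "S = integral {s..t} Q"
  define D where "D = (\<lambda>i. Y t i - Y s i)"
  define P where "P = (\<lambda>i. S *v G X i)"
  define E where "E = (\<lambda>i. D i - P i)"
  have rX: "rsum X = 0" unfolding X_def by (rule rsumY[OF s0])
  have rD: "rsum D = 0" unfolding D_def using rsumY[OF s0] rsumY[of t] s0 st by (simp add: rsum_diff)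
  have rP: "rsum P = 0" unfolding P_def by (simp add: rsum_S rsum_G)
  have rE: "rsum E = 0" unfolding E_def using rD rP by (simp add: rsum_diff)
  have Yt: "Y t = (\<lambda>i. X i + D i)" unfolding X_def D_def by simp
  have DPE: "D = (\<lambda>i. P i + E i)" unfolding E_def by simp
  have e1: "VV (Y t) = VV X + 2 * Bf X D + VV D" unfolding VV_def Yt by (rule Bf_expand[OF rX rD])
  have e2: "Bf X D = Bf X P + Bf X E" unfolding DPE by (rule Bf_add2[OF rX rP rE])
  have key: "2 * Bf X P \<le> - (1 / h) * qS S X"
  proof -
    have "2 * Bf X (\<lambda>i. (\<lambda>v. S *v v) (G X i)) \<le> - (1 / h) * (\<Sum>i\<in>UNIV. X i \<bullet> (\<lambda>v. S *v v) (X i))"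
    proof (rule Bf_key[OF rX])
      show "bounded_linear ((*v) S)" by (rule matrix_vector_mul_bounded_linear)
      show "\<And>a b. a \<bullet> (S *v b) = b \<bullet> (S *v a)" using S_sym[OF s0 st] unfolding S_def msym_def by blast
      show "\<And>a. 0 \<le> a \<bullet> (S *v a)" using S_psd[OF s0 st] unfolding S_def mpsd_def by blast
    qed
    then show ?thesis unfolding P_def qS_def by simp
  qed
  have nX: "nrm1 X \<le> M" unfolding X_def by (rule M) (use s0 st tb in auto)
  have nE: "nrm1 E \<le> pp * (g0 * pp * g0 * M) * (t - s)^2"
  proof -
    have "nrm1 E \<le> (\<Sum>i\<in>(UNIV::'p set). (g0 * pp * g0 * M) * (t - s)^2)"
      unfolding nrm1_def E_def D_def P_def X_def S_def
      by (rule sum_mono) (rule decomp[OF s0 st tb M0 M])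
    then show ?thesis by (simp add: pp_def)
  qed
  have nD: "nrm1 D \<le> pp * g0 * M * (t - s)" unfolding D_def by (rule Y_lip1[OF s0 st tb M0 M])
  have bE: "2 * Bf X E \<le> 2 * CBc * M * pp * (g0 * pp * g0 * M) * (t - s)^2"
  proof -
    have "Bf X E \<le> CBc * nrm1 X * nrm1 E" using CBc_bd[OF rX rE] by simp
    also have "\<dots> \<le> CBc * M * (pp * (g0 * pp * g0 * M) * (t - s)^2)"
      by (intro mult_mono mult_left_mono nX nE CBc0 nrm1_nonneg) (use CBc0 M0 in auto)
    finally show ?thesis by (simp add: mult_ac)
  qed
  have bD: "VV D \<le> CBc * (pp * g0 * M)^2 * (t - s)^2"
  proof -
    have "VV D \<le> CBc * nrm1 D * nrm1 D" unfolding VV_def using CBc_bd[OF rD rD] by simp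
    also have "\<dots> \<le> CBc * (pp * g0 * M * (t - s)) * (pp * g0 * M * (t - s))"
      by (intro mult_mono mult_left_mono nD CBc0 nrm1_nonneg) (use CBc0 nrm1_nonneg[of D] nD in auto)
    finally show ?thesis by (simp add: power2_eq_square mult_ac)
  qed
  show ?thesis using e1 e2 key bE bD unfolding X_def S_def by (simp add: algebra_simps)
qed

end

lemma sq_sum_le:
  fixes u :: "'a \<Rightarrow> real"
  assumes "finite A"
  shows "(\<Sum>l\<in>A. u l)^2 \<le> real (card A) * (\<Sum>l\<in>A. (u l)^2)"
proof -
  have "(\<Sum>l\<in>A. u l)^2 = (\<Sum>j\<in>A. \<Sum>l\<in>A. u j * u l)"
    by (simp add: power2_eq_square sum_product)
  also have "\<dots> \<le> (\<Sum>j\<in>A. \<Sum>l\<in>A. ((u j)^2 + (u l)^2) / 2)"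
  proof (intro sum_mono)
    fix j l
    have "0 \<le> (u j - u l)^2" by simp
    then show "u j * u l \<le> ((u j)^2 + (u l)^2) / 2" by (simp add: power2_eq_square algebra_simps)
  qed
  also have "\<dots> = ((\<Sum>j\<in>A. \<Sum>l\<in>A. (u j)^2) + (\<Sum>j\<in>A. \<Sum>l\<in>A. (u l)^2)) / 2"
    by (simp only: add_divide_distrib sum.distrib sum_divide_distrib)
  also have "(\<Sum>j\<in>A. \<Sum>l\<in>A. (u l)^2) = (\<Sum>j\<in>A. \<Sum>l\<in>A. (u j)^2)"
    by (rule sum.swap)
  also have "(\<Sum>j\<in>A. \<Sum>l\<in>A. (u j)^2) = real (card A) * (\<Sum>l\<in>A. (u l)^2)"
    by (simp add: sum_distrib_left)
  also have "(real (card A) * (\<Sum>l\<in>A. (u l)^2) + real (card A) * (\<Sum>l\<in>A. (u l)^2)) / 2 = real (card A) * (\<Sum>l\<in>A. (u l)^2)"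
    by simp
  finally show ?thesis .
qed

locale intv = sysm \<gamma> r Q x for \<gamma> :: "'p::finite \<Rightarrow> 'p \<Rightarrow> real" and r and Q :: "real \<Rightarrow> real^'n^'n" and x +
  fixes a T :: real and N :: nat and M :: real
  assumes a0: "0 \<le> a" and T0: "0 < T" and N1: "1 \<le> N" and M0: "0 \<le> M"
    and Mb: "\<And>u. u \<in> {0..a+T} \<Longrightarrow> nrm1 (Y u) \<le> M"
begin

definition w :: real where "w = T / real N"
definition s :: "nat \<Rightarrow> real" where "s k = a + real k * w"
definition Sk :: "nat \<Rightarrow> real^'n^'n" where "Sk k = integral {s k..s (Suc k)} Q"
definition qk :: "nat \<Rightarrow> real" where "qk k = qS (Sk k) (Y (s k))"
definition J :: real where "J = (\<Sum>k<N. qk k)"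
definition cE :: real where "cE = g0 * pp * g0 * M"
definition c2 :: real where "c2 = 2 * CBc * M * pp * cE + CBc * (pp * g0 * M)^2"

lemma w_pos: "0 < w" unfolding w_def using T0 N1 by simp
lemma s_Suc: "s (Suc k) = s k + w" unfolding s_def by (simp add: algebra_simps)
lemma s_0: "s 0 = a" unfolding s_def by simp
lemma s_N: "s N = a + T" unfolding s_def w_def using N1 by simp
lemma s_nonneg: "0 \<le> s k" unfolding s_def using a0 w_pos by simp
lemma s_le: "k \<le> N \<Longrightarrow> s k \<le> a + T"
  unfolding s_def w_def using T0 N1 by (simp add: field_simps)
lemma s_step: "s k \<le> s (Suc k)" using s_Suc w_pos by simp
lemma s_ge: "a \<le> s k" unfolding s_def using w_pos by simp
lemma Nw: "real N * w = T" unfolding w_def using N1 by simp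

lemma cE0: "0 \<le> cE" unfolding cE_def using g0_nonneg pp_pos M0 by simp

lemma Sk_sym: "msym (Sk k)" unfolding Sk_def by (rule S_sym[OF s_nonneg s_step])
lemma Sk_psd: "mpsd (Sk k)" unfolding Sk_def by (rule S_psd[OF s_nonneg s_step])
lemma Sk_bnd: "v \<bullet> (Sk k *v v) \<le> w * (norm v)^2"
  using S_bnd[OF s_nonneg[of k] s_step[of k], of v] unfolding Sk_def by (simp add: s_Suc)

lemma qk_nonneg: "0 \<le> qk k" unfolding qk_def by (rule qS_nonneg[OF Sk_psd])

lemma V_steps: "n \<le> N \<Longrightarrow> VV (Y (s n)) \<le> VV (Y a) - (1/h) * (\<Sum>k<n. qk k) + real n * c2 * w^2"
proof (induction n)
  case 0 then show ?case by (simp add: s_0)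
next
  case (Suc n)
  have le: "s (Suc n) \<le> a + T" by (rule s_le[OF Suc.prems])
  have "VV (Y (s (Suc n))) \<le> VV (Y (s n)) - (1/h) * qS (integral {s n..s (Suc n)} Q) (Y (s n))
     + (2 * CBc * M * pp * (g0 * pp * g0 * M) + CBc * (pp * g0 * M)^2) * (s (Suc n) - s n)^2"
    by (rule local_est[OF s_nonneg s_step le M0 Mb])
  also have "\<dots> = VV (Y (s n)) - (1/h) * qk n + c2 * w^2"
    unfolding qk_def Sk_def c2_def cE_def by (simp add: s_Suc)
  finally show ?case using Suc by (simp add: algebra_simps)
qed

lemma V_total: "VV (Y (a + T)) \<le> VV (Y a) - J / h + T * c2 * w"
proof -
  have "VV (Y (s N)) \<le> VV (Y a) - (1/h) * J + real N * c2 * w^2"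
    unfolding J_def by (rule V_steps) simp
  moreover have "real N * c2 * w^2 = T * c2 * w" using Nw by (simp add: power2_eq_square mult_ac)
  ultimately show ?thesis by (simp add: s_N)
qed

lemma S_sum: "n \<le> N \<Longrightarrow> (\<Sum>k<n. Sk k) = integral {a..s n} Q"
proof (induction n)
  case 0 then show ?case by (simp add: s_0)
next
  case (Suc n)
  have "(\<Sum>k<Suc n. Sk k) = integral {a..s n} Q + integral {s n..s (Suc n)} Q"
    using Suc by (simp add: Sk_def)
  also have "\<dots> = integral {a..s (Suc n)} Q"
    by (rule Henstock_Kurzweil_Integration.integral_combine) (use s_ge s_step a0 Qint[OF a0, of "s (Suc n)"] s_ge[of "Suc n"] in auto)
  finally show ?case .
qed

lemma dev_bound:
  "k \<le> N \<Longrightarrow> norm (Y (s k) i - Y a i) \<le> (\<Sum>l<k. norm (Sk l *v G (Y (s l)) i)) + real k * cE * w^2"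
proof (induction k)
  case 0 then show ?case by (simp add: s_0)
next
  case (Suc k)
  have le: "s (Suc k) \<le> a + T" by (rule s_le[OF Suc.prems])
  have d: "norm (Y (s (Suc k)) i - Y (s k) i - Sk k *v G (Y (s k)) i) \<le> cE * w^2"
    using decomp[OF s_nonneg s_step le M0 Mb, of i] unfolding Sk_def cE_def by (simp add: s_Suc)
  have "norm (Y (s (Suc k)) i - Y a i) \<le> norm (Y (s k) i - Y a i) + norm (Sk k *v G (Y (s k)) i)
      + norm (Y (s (Suc k)) i - Y (s k) i - Sk k *v G (Y (s k)) i)"
    by (rule order_trans[OF _ add_mono[OF norm_triangle_ineq order_refl]], rule order_trans[OF _ norm_triangle_ineq]) (simp add: algebra_simps)
  then show ?case using Suc d by (simp add: algebra_simps)
qed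

lemma G_q: "(G W i) \<bullet> (S *v G W i) \<le> g0^2 * qS S W" if "msym S" "mpsd S" for S :: "real^'n^'n" and W :: "'p \<Rightarrow> real^'n"
proof -
  have "(G W i) \<bullet> (S *v G W i) \<le> (\<Sum>j\<in>UNIV. \<bar>\<gamma> i j\<bar>) * (\<Sum>j\<in>UNIV. \<bar>\<gamma> i j\<bar> * (W j \<bullet> (S *v W j)))"
    unfolding G_def by (rule psd_comb[OF that])
  also have "\<dots> \<le> g0 * (\<Sum>j\<in>UNIV. g0 * (W j \<bullet> (S *v W j)))"
  proof (rule mult_mono)
    show "(\<Sum>j\<in>UNIV. \<bar>\<gamma> i j\<bar>) \<le> g0" by (rule rowsum_le_g0)
    show "(\<Sum>j\<in>UNIV. \<bar>\<gamma> i j\<bar> * (W j \<bullet> (S *v W j))) \<le> (\<Sum>j\<in>UNIV. g0 * (W j \<bullet> (S *v W j)))"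
      by (rule sum_mono, rule mult_right_mono[OF gamma_le_g0]) (use that in \<open>simp add: mpsd_def\<close>)
    show "0 \<le> g0" by (rule g0_nonneg)
    show "0 \<le> (\<Sum>j\<in>UNIV. \<bar>\<gamma> i j\<bar> * (W j \<bullet> (S *v W j)))"
      using that by (auto simp: mpsd_def intro!: sum_nonneg)
  qed
  also have "\<dots> = g0^2 * qS S W" unfolding qS_def by (simp add: sum_distrib_left power2_eq_square mult_ac)
  finally show ?thesis .
qed

lemma u_bound: "(norm (Sk l *v G (Y (s l)) i))^2 \<le> w * g0^2 * qk l"
proof -
  have "(norm (Sk l *v G (Y (s l)) i))^2 \<le> w * ((G (Y (s l)) i) \<bullet> (Sk l *v G (Y (s l)) i))"
    by (rule psd_norm[OF Sk_sym Sk_psd Sk_bnd]) (use w_pos in simp)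
  also have "\<dots> \<le> w * (g0^2 * qk l)"
    unfolding qk_def by (rule mult_left_mono[OF G_q[OF Sk_sym Sk_psd]]) (use w_pos in simp)
  finally show ?thesis by (simp add: mult_ac)
qed

lemma dev_sq: "k \<le> N \<Longrightarrow> (norm (Y a i - Y (s k) i))^2 \<le> 2 * T * g0^2 * J + 2 * T^2 * cE^2 * w^2"
proof -
  assume kN: "k \<le> N"
  define U where "U = (\<Sum>l<k. norm (Sk l *v G (Y (s l)) i))"
  define V where "V = real k * cE * w^2"
  have U0: "0 \<le> U" unfolding U_def by (simp add: sum_nonneg)
  have V0: "0 \<le> V" unfolding V_def using cE0 by simp
  have n: "norm (Y a i - Y (s k) i) \<le> U + V"
    using dev_bound[OF kN, of i] unfolding U_def V_def by (simp add: norm_minus_commute)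
  have A1: "(norm (Y a i - Y (s k) i))^2 \<le> 2 * U^2 + 2 * V^2"
  proof -
    have "(norm (Y a i - Y (s k) i))^2 \<le> (U + V)^2" by (rule power_mono[OF n]) simp
    moreover have "0 \<le> (U - V)^2" by simp
    ultimately show ?thesis by (simp add: power2_eq_square algebra_simps)
  qed
  have J0: "0 \<le> J" unfolding J_def by (simp add: sum_nonneg qk_nonneg)
  have A2: "U^2 \<le> real k * (w * g0^2 * J)"
  proof -
    have "U^2 \<le> real k * (\<Sum>l<k. (norm (Sk l *v G (Y (s l)) i))^2)"
      unfolding U_def using sq_sum_le[of "{..<k}" "\<lambda>l. norm (Sk l *v G (Y (s l)) i)"] by simp
    also have "(\<Sum>l<k. (norm (Sk l *v G (Y (s l)) i))^2) \<le> (\<Sum>l<k. w * g0^2 * qk l)"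
      by (rule sum_mono) (rule u_bound)
    also have "(\<Sum>l<k. w * g0^2 * qk l) = w * g0^2 * (\<Sum>l<k. qk l)" by (simp add: sum_distrib_left)
    also have "\<dots> \<le> w * g0^2 * J" unfolding J_def
      by (rule mult_left_mono, rule sum_mono2) (use kN qk_nonneg w_pos in auto)
    finally show ?thesis by (simp add: mult_left_mono)
  qed
  have A3: "real k * (w * g0^2 * J) \<le> T * g0^2 * J"
  proof -
    have "real k * (w * g0^2 * J) \<le> real N * (w * g0^2 * J)"
      using kN w_pos J0 by (intro mult_right_mono) auto
    also have "real N * (w * g0^2 * J) = (real N * w) * g0^2 * J" by (simp add: mult_ac)
    finally show ?thesis using Nw by simp
  qed
  have A4: "V^2 \<le> T^2 * cE^2 * w^2"
  proof -
    have "V \<le> real N * cE * w^2" unfolding V_def using kN w_pos cE0 by (intro mult_right_mono) auto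
    also have "\<dots> = T * cE * w" using Nw by (simp add: power2_eq_square mult_ac)
    finally have "V^2 \<le> (T * cE * w)^2" by (rule power_mono[OF _ V0])
    then show ?thesis by (simp add: power_mult_distrib)
  qed
  show ?thesis using A1 A2 A3 A4 by simp
qed

end

context intv begin

lemma exc_est:
  assumes e0: "0 \<le> \<epsilon>" and exc: "\<And>v. \<epsilon> * (norm v)^2 \<le> v \<bullet> (integral {a..a+T} Q *v v)"
  shows "\<epsilon> * nrm2 (Y a) \<le> (2 + 4 * pp * T^2 * g0^2) * J + 4 * pp * T^3 * cE^2 * w^2"
proof -
  define B where "B = 2 * T * g0^2 * J + 2 * T^2 * cE^2 * w^2"
  have MM: "integral {a..a+T} Q = (\<Sum>k<N. Sk k)" using S_sum[of N] s_N by simp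
  have "\<epsilon> * nrm2 (Y a) = (\<Sum>i\<in>UNIV. \<epsilon> * (norm (Y a i))^2)" unfolding nrm2_def by (simp add: sum_distrib_left)
  also have "\<dots> \<le> qS (integral {a..a+T} Q) (Y a)" unfolding qS_def by (rule sum_mono) (rule exc)
  also have "\<dots> = (\<Sum>k<N. qS (Sk k) (Y a))" unfolding MM by (rule qS_sum)
  also have "\<dots> \<le> (\<Sum>k<N. 2 * qk k + 2 * (w * (pp * B)))"
  proof (rule sum_mono)
    fix k assume k: "k \<in> {..<N}"
    have "qS (Sk k) (Y a) \<le> 2 * qS (Sk k) (Y (s k)) + 2 * qS (Sk k) (\<lambda>i. Y a i - Y (s k) i)"
      by (rule qS_split[OF Sk_sym Sk_psd])
    also have "qS (Sk k) (\<lambda>i. Y a i - Y (s k) i) \<le> w * nrm2 (\<lambda>i. Y a i - Y (s k) i)"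
      by (rule qS_le[OF Sk_bnd])
    also have "nrm2 (\<lambda>i. Y a i - Y (s k) i) \<le> (\<Sum>i\<in>(UNIV::'p set). B)"
      unfolding nrm2_def B_def by (rule sum_mono) (rule dev_sq, use k in simp)
    also have "(\<Sum>i\<in>(UNIV::'p set). B) = pp * B" by (simp add: pp_def)
    finally show "qS (Sk k) (Y a) \<le> 2 * qk k + 2 * (w * (pp * B))"
      unfolding qk_def using w_pos by (simp add: mult_left_mono)
  qed
  also have "\<dots> = 2 * J + real N * w * 2 * pp * B"
    unfolding J_def by (simp add: sum.distrib sum_distrib_left[symmetric] mult_ac)
  also have "\<dots> = (2 + 4 * pp * T^2 * g0^2) * J + 4 * pp * T^3 * cE^2 * w^2"
    unfolding B_def Nw by (simp add: algebra_simps power2_eq_square power3_eq_cube)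
  finally show ?thesis .
qed

end

lemma le_lim:
  fixes X Y C :: real
  assumes "\<And>N::nat. 1 \<le> N \<Longrightarrow> X \<le> Y + C / real N"
  shows "X \<le> Y"
proof (rule ccontr)
  assume "\<not> X \<le> Y"
  then have d: "0 < X - Y" by simp
  obtain n :: nat where n: "max 1 (C / (X - Y)) < real n" using reals_Archimedean2 by blast
  then have n1: "1 \<le> n" by simp
  have np: "0 < real n" using n1 by simp
  have "C / (X - Y) < real n" using n by simp
  then have "C < real n * (X - Y)" using d by (simp add: field_simps)
  then have "C / real n < X - Y" using np by (simp add: field_simps)
  then show False using assms[OF n1] by simp
qed

context sysm begin

lemma interval_est:
  assumes a0: "0 \<le> a" and T0: "0 < T" and e0: "0 \<le> \<epsilon>"
    and exc: "\<And>v. \<epsilon> * (norm v)^2 \<le> v \<bullet> (integral {a..a+T} Q *v v)"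
  shows "VV (Y (a+T)) \<le> VV (Y a) - \<epsilon> * nrm2 (Y a) / (h * (2 + 4 * pp * T^2 * g0^2))"
proof -
  have b0: "0 \<le> a + T" using a0 T0 by simp
  obtain M where M0: "0 \<le> M" and Mb: "\<And>u. u \<in> {0..a+T} \<Longrightarrow> nrm1 (Y u) \<le> M"
    by (rule Y_bound[OF b0], rule that)
  define K1 where "K1 = 2 + 4 * pp * T^2 * g0^2"
  have K1: "0 < K1" unfolding K1_def using pp_pos by (simp add: add_pos_nonneg)
  define cE' where "cE' = g0 * pp * g0 * M"
  define c2' where "c2' = 2 * CBc * M * pp * cE' + CBc * (pp * g0 * M)^2"
  define C where "C = (4 * pp * T^3 * cE'^2 * T^2) / (h * K1) + T * c2' * T"
  have si: "sysm \<gamma> r Q x" by (rule sysm_axioms)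
  have main: "VV (Y (a+T)) \<le> VV (Y a) - \<epsilon> * nrm2 (Y a) / (h * K1) + C / real N" if N1: "1 \<le> N" for N :: nat
  proof -
    interpret iv: intv \<gamma> r Q x a T N M
      by (rule intv.intro[OF si]) (unfold_locales; use a0 T0 N1 M0 Mb in auto)
    have cE: "iv.cE = cE'" unfolding iv.cE_def cE'_def ..
    have c2: "iv.c2 = c2'" unfolding iv.c2_def c2'_def cE ..
    have V: "VV (Y (a+T)) \<le> VV (Y a) - iv.J / h + T * c2' * iv.w" using iv.V_total c2 by simp
    have E: "\<epsilon> * nrm2 (Y a) \<le> K1 * iv.J + 4 * pp * T^3 * cE'^2 * iv.w^2"
      using iv.exc_est[OF e0 exc] cE unfolding K1_def by simp
    have w: "iv.w = T / real N" by (rule iv.w_def)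
    have wle: "iv.w^2 \<le> T^2 / real N"
    proof -
      have "iv.w^2 = T^2 / (real N)^2" unfolding w by (simp add: power_divide)
      also have "\<dots> \<le> T^2 / real N" using N1 by (intro divide_left_mono) (auto simp: power2_eq_square)
      finally show ?thesis .
    qed
    have J: "(\<epsilon> * nrm2 (Y a) - 4 * pp * T^3 * cE'^2 * iv.w^2) / K1 \<le> iv.J"
      using E K1 by (simp add: field_simps)
    have hp: "0 < h" by (rule h_pos)
    have "(\<epsilon> * nrm2 (Y a) - 4 * pp * T^3 * cE'^2 * iv.w^2) / K1 / h \<le> iv.J / h"
      by (rule divide_right_mono[OF J]) (use hp in simp)
    then have "iv.J / h \<ge> (\<epsilon> * nrm2 (Y a) - 4 * pp * T^3 * cE'^2 * iv.w^2) / (h * K1)"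
      by (simp add: divide_divide_eq_left mult.commute)
    then have "VV (Y (a+T)) \<le> VV (Y a) - \<epsilon> * nrm2 (Y a) / (h * K1) + (4 * pp * T^3 * cE'^2 * iv.w^2) / (h * K1) + T * c2' * iv.w"
      using V by (simp add: diff_divide_distrib)
    also have "(4 * pp * T^3 * cE'^2 * iv.w^2) / (h * K1) \<le> (4 * pp * T^3 * cE'^2 * T^2) / (h * K1) / real N"
    proof -
      have "4 * pp * T^3 * cE'^2 * iv.w^2 \<le> 4 * pp * T^3 * cE'^2 * (T^2 / real N)"
        by (rule mult_left_mono[OF wle]) (use pp_pos T0 in simp)
      then show ?thesis using hp K1 by (simp add: divide_right_mono field_simps)
    qed
    also have "T * c2' * iv.w = T * c2' * T / real N" unfolding w by simp
    finally show ?thesis unfolding C_def by (simp add: add_divide_distrib)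
  qed
  have "VV (Y (a+T)) \<le> VV (Y a) - \<epsilon> * nrm2 (Y a) / (h * K1)"
    by (rule le_lim[of _ _ C]) (use main in auto)
  then show ?thesis unfolding K1_def .
qed

end

lemma decay_to_zero:
  fixes V d :: "nat \<Rightarrow> real"
  assumes V0: "\<And>i. 0 \<le> V i" and d0: "\<And>i. 0 \<le> d i" and d1: "\<And>i. d i \<le> 1"
    and step: "\<And>i. V (Suc i) \<le> (1 - d i) * V i" and ns: "\<not> summable d"
    and e: "0 < e"
  shows "\<exists>n. V n < e"
proof -
  have bnd: "V n \<le> V 0 * exp (- (\<Sum>i<n. d i))" for n
  proof (induction n)
    case 0 then show ?case by simp
  next
    case (Suc n)
    have "V (Suc n) \<le> (1 - d n) * V n" by (rule step)
    also have "\<dots> \<le> exp (- d n) * V n"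
      by (rule mult_right_mono[OF _ V0]) (use exp_ge_add_one_self[of "- d n"] in simp)
    also have "\<dots> \<le> exp (- d n) * (V 0 * exp (- (\<Sum>i<n. d i)))"
      by (rule mult_left_mono[OF Suc.IH]) simp
    also have "\<dots> = V 0 * exp (- (\<Sum>i<Suc n. d i))" by (simp add: exp_add[symmetric] mult_ac)
    finally show ?case .
  qed
  define B where "B = V 0 / e"
  have "\<exists>n. B < (\<Sum>i<n. d i)"
  proof (rule ccontr)
    assume "\<not> (\<exists>n. B < (\<Sum>i<n. d i))"
    then have "\<And>n. (\<Sum>i<n. d i) \<le> B" by (simp add: not_less)
    then have "summable d" by (rule summableI_nonneg_bounded[OF d0])
    with ns show False by simp
  qed
  then obtain n where n: "B < (\<Sum>i<n. d i)" by blast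
  have B0: "0 \<le> B" unfolding B_def using V0[of 0] e by simp
  have "exp (- (\<Sum>i<n. d i)) \<le> exp (- B)" using n by simp
  also have "exp (- B) = 1 / exp B" by (simp add: exp_minus field_simps)
  also have "\<dots> \<le> 1 / (1 + B)" using exp_ge_add_one_self[of B] B0 by (intro divide_left_mono) auto
  finally have ex: "exp (- (\<Sum>i<n. d i)) \<le> 1 / (1 + B)" .
  have "V n \<le> V 0 * (1 / (1 + B))"
    using bnd[of n] mult_left_mono[OF ex V0[of 0]] by linarith
  also have "\<dots> < e" unfolding B_def using e V0[of 0] by (simp add: field_simps)
  finally show ?thesis by blast
qed

lemma not_summable_min:
  fixes \<delta> :: "nat \<Rightarrow> real"
  assumes d0: "\<And>i. 0 \<le> \<delta> i" and ns: "\<not> summable \<delta>" and c: "0 < c"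
  shows "\<not> summable (\<lambda>i. min (c * \<delta> i) 1)"
proof
  assume s: "summable (\<lambda>i. min (c * \<delta> i) 1)"
  have "(\<lambda>i. min (c * \<delta> i) 1) \<longlonglongrightarrow> 0" by (rule summable_LIMSEQ_zero[OF s])
  then have ev: "eventually (\<lambda>i. min (c * \<delta> i) 1 < 1) sequentially" by (rule order_tendstoD) simp
  have "eventually (\<lambda>i. norm (\<delta> i) \<le> min (c * \<delta> i) 1 / c) sequentially"
    by (rule eventually_mono[OF ev]) (use d0 c in \<open>auto simp: min_def split: if_splits\<close>)
  then have "summable \<delta>"
    by (rule summable_comparison_test_ev) (rule summable_divide[OF s])
  with ns show False by simp
qed

context sysm begin

lemma VV_ge: "0 \<le> t \<Longrightarrow> (norm (Y t i))^2 \<le> VV (Y t)"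
proof -
  assume t: "0 \<le> t"
  have "(norm (Y t i))^2 = Y t i \<bullet> Y t i" by (simp add: power2_norm_eq_inner)
  also have "\<dots> \<le> ip (Y t) (Y t)"
    unfolding ip_def by (rule member_le_sum) auto
  also have "\<dots> \<le> VV (Y t)" unfolding VV_def by (rule Bf_ge[OF rsumY[OF t]])
  finally show ?thesis .
qed

lemma VV_le: "0 \<le> t \<Longrightarrow> VV (Y t) \<le> (CBc * pp + 1) * nrm2 (Y t)"
proof -
  assume t: "0 \<le> t"
  have a: "VV (Y t) \<le> CBc * (nrm1 (Y t) * nrm1 (Y t))" unfolding VV_def using CBc_bd[OF rsumY[OF t] rsumY[OF t]] by (simp add: mult_ac)
  have b: "nrm1 (Y t) * nrm1 (Y t) \<le> pp * nrm2 (Y t)"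
    unfolding nrm1_def nrm2_def pp_def using sq_sum_le[of UNIV "\<lambda>i. norm (Y t i)"] by (simp add: power2_eq_square)
  have c: "CBc * (nrm1 (Y t) * nrm1 (Y t)) \<le> CBc * (pp * nrm2 (Y t))" by (rule mult_left_mono[OF b CBc0])
  have d: "CBc * (pp * nrm2 (Y t)) \<le> (CBc * pp + 1) * nrm2 (Y t)" using nrm2_nonneg[of "Y t"] by (simp add: algebra_simps)
  show ?thesis using a c d by linarith
qed

lemma VV_nonneg: "0 \<le> t \<Longrightarrow> 0 \<le> VV (Y t)"
  using VV_ge[of t] by (meson order_trans zero_le_power2)

lemma VV_mono: assumes "0 \<le> a" "a \<le> t" shows "VV (Y t) \<le> VV (Y a)"
proof (cases "a = t")
  case True then show ?thesis by simp
next
  case False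
  then have T0: "0 < t - a" using assms by simp
  have "VV (Y (a + (t - a))) \<le> VV (Y a) - 0 * nrm2 (Y a) / (h * (2 + 4 * pp * (t - a)^2 * g0^2))"
  proof (rule interval_est[OF assms(1) T0 order_refl])
    fix v :: "real^'n"
    show "0 * (norm v)^2 \<le> v \<bullet> (integral {a..a + (t - a)} Q *v v)"
      using S_psd[of a "a + (t - a)"] assms unfolding mpsd_def by simp
  qed
  then show ?thesis by simp
qed

lemma final:
  assumes Qexc: "sufficiently_exciting Q"
  shows "((\<lambda>t. norm (x i t - xbar)) \<longlongrightarrow> 0) at_top"
proof -
  obtain \<epsilon> T :: "nat \<Rightarrow> real" where pos: "\<And>i. 0 < \<epsilon> i \<and> 0 < T i"
    and sm: "\<And>i. sigma_min (integral {(\<Sum>j<i. T j) .. (\<Sum>j<i. T j) + T i} Q) \<ge> \<epsilon> i"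
    and ns: "\<not> summable (\<lambda>i. delta (\<epsilon> i) (T i))"
    using Qexc unfolding sufficiently_exciting_def by blast
  define tt where "tt i = (\<Sum>j<i. T j)" for i
  have tt0: "0 \<le> tt i" for i unfolding tt_def using pos by (simp add: sum_nonneg less_imp_le)
  have ttS: "tt (Suc i) = tt i + T i" for i unfolding tt_def by simp
  define MM where "MM i = integral {tt i..tt i + T i} Q" for i
  have MMs: "msym (MM i)" for i unfolding MM_def by (rule S_sym) (use tt0 pos in \<open>auto simp: less_imp_le\<close>)
  have MMp: "mpsd (MM i)" for i unfolding MM_def by (rule S_psd) (use tt0 pos in \<open>auto simp: less_imp_le\<close>)
  have exc: "\<epsilon> i * (norm v)^2 \<le> v \<bullet> (MM i *v v)" for i v
  proof (rule spectral_lb[OF MMs MMp])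
    fix u :: "real^'n" assume "norm u = 1"
    then show "\<epsilon> i \<le> norm (MM i *v u)" unfolding MM_def tt_def by (rule sigma_min_le[OF sm])
  qed
  have eT: "\<epsilon> i \<le> T i" for i
  proof -
    define u where "u = (axis undefined (1::real) :: real^'n)"
    have nu: "norm u = 1" unfolding u_def by (simp add: norm_axis_1)
    have "\<epsilon> i = \<epsilon> i * (norm u)^2" using nu by simp
    also have "\<dots> \<le> u \<bullet> (MM i *v u)" by (rule exc)
    also have "\<dots> \<le> (tt i + T i - tt i) * (norm u)^2" unfolding MM_def
      by (rule S_bnd) (use tt0 pos in \<open>auto simp: less_imp_le\<close>)
    finally show ?thesis using nu by simp
  qed
  define C' where "C' = CBc * pp + 1"
  have C'p: "0 < C'" unfolding C'_def using CBc0 pp_pos by (simp add: add_nonneg_pos)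
  define K0 where "K0 = 2 + 4 * pp * g0^2"
  have K0p: "0 < K0" unfolding K0_def using pp_pos by (simp add: add_pos_nonneg)
  define c where "c = 2 / (h * C' * K0)"
  have cp: "0 < c" unfolding c_def using h_pos C'p K0p by simp
  define V where "V i = VV (Y (tt i))" for i
  define d where "d i = min (c * delta (\<epsilon> i) (T i)) 1" for i
  have delta0: "0 \<le> delta (\<epsilon> i) (T i)" for i unfolding delta_def using pos[of i] by simp
  have Vnn: "0 \<le> V i" for i unfolding V_def by (rule VV_nonneg[OF tt0])
  have step: "V (Suc i) \<le> (1 - d i) * V i" for i
  proof -
    define K1 where "K1 = 2 + 4 * pp * (T i)^2 * g0^2"
    have K1p: "0 < K1" unfolding K1_def using pp_pos by (simp add: add_pos_nonneg)
    have ie: "VV (Y (tt i + T i)) \<le> VV (Y (tt i)) - \<epsilon> i * nrm2 (Y (tt i)) / (h * K1)"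
      unfolding K1_def
      by (rule interval_est[OF tt0]) (use pos[of i] exc[of i] less_imp_le in \<open>auto simp: MM_def\<close>)
    have n2: "V i / C' \<le> nrm2 (Y (tt i))" unfolding V_def C'_def
      using VV_le[OF tt0, of i] C'p unfolding C'_def by (simp add: field_simps)
    define \<kappa> where "\<kappa> = \<epsilon> i / (h * K1 * C')"
    have k1: "\<epsilon> i * nrm2 (Y (tt i)) / (h * K1) \<ge> \<kappa> * V i"
    proof -
      have "\<epsilon> i * (V i / C') \<le> \<epsilon> i * nrm2 (Y (tt i))"
        by (rule mult_left_mono[OF n2]) (use pos[of i] in \<open>simp add: less_imp_le\<close>)
      then have "\<epsilon> i * (V i / C') / (h * K1) \<le> \<epsilon> i * nrm2 (Y (tt i)) / (h * K1)"
        by (rule divide_right_mono) (use h_pos K1p in simp)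
      moreover have "\<epsilon> i * (V i / C') / (h * K1) = \<kappa> * V i" unfolding \<kappa>_def by (simp add: field_simps)
      ultimately show ?thesis by simp
    qed
    have kd: "c * delta (\<epsilon> i) (T i) \<le> \<kappa>"
    proof (cases "T i \<le> 1")
      case True
      have "K1 \<le> K0" unfolding K1_def K0_def using True pos[of i] pp_pos g0_nonneg
        by (intro add_left_mono mult_right_mono mult_left_mono) (auto simp: power_le_one)
      have "c * delta (\<epsilon> i) (T i) \<le> c * (\<epsilon> i / 2)" unfolding delta_def using cp by (intro mult_left_mono) auto
      also have "\<dots> = \<epsilon> i / (h * C' * K0)" unfolding c_def by simp
      also have "\<dots> \<le> \<kappa>" unfolding \<kappa>_def using \<open>K1 \<le> K0\<close> pos[of i] h_pos C'p K1p
        by (intro divide_left_mono) (auto simp: mult_ac less_imp_le intro!: mult_pos_pos)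
      finally show ?thesis .
    next
      case False
      then have T1: "1 \<le> T i" by simp
      have "K1 \<le> K0 * (T i)^2" unfolding K1_def K0_def using T1 pp_pos g0_nonneg
        by (simp add: algebra_simps)
      have e2: "(\<epsilon> i)^2 \<le> (T i)^2" using eT[of i] pos[of i] by (intro power_mono) (auto simp: less_imp_le)
      have "delta (\<epsilon> i) (T i) \<le> (\<epsilon> i)^3 / (240 * (T i)^5)" unfolding delta_def by simp
      also have "\<dots> \<le> \<epsilon> i * (T i)^2 / (240 * (T i)^5)"
        using e2 pos[of i] by (intro divide_right_mono) (auto simp: power3_eq_cube power2_eq_square mult_left_mono)
      also have "\<dots> = \<epsilon> i / (240 * (T i)^3)" using pos[of i] by (simp add: field_simps power_eq_if)
      also have "\<dots> \<le> \<epsilon> i / (240 * (T i)^2)"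
        using pos[of i] T1 by (intro divide_left_mono mult_left_mono) (auto simp: power_increasing less_imp_le)
      finally have dl: "delta (\<epsilon> i) (T i) \<le> \<epsilon> i / (240 * (T i)^2)" .
      have "c * delta (\<epsilon> i) (T i) \<le> c * (\<epsilon> i / (240 * (T i)^2))" by (rule mult_left_mono[OF dl]) (use cp in simp)
      also have "\<dots> \<le> \<epsilon> i / (h * C' * K0 * (T i)^2)"
        unfolding c_def using h_pos C'p K0p pos[of i] T1 by (simp add: field_simps)
      also have "\<dots> \<le> \<kappa>" unfolding \<kappa>_def using \<open>K1 \<le> K0 * (T i)^2\<close> pos[of i] h_pos C'p K1p K0p
        by (intro divide_left_mono) (auto simp: mult_ac less_imp_le intro!: mult_pos_pos)
      finally show ?thesis .
    qed
    have "d i \<le> \<kappa>" unfolding d_def using kd by simp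
    then have "d i * V i \<le> \<kappa> * V i" by (rule mult_right_mono[OF _ Vnn])
    then show ?thesis using ie k1 unfolding V_def ttS by (simp add: algebra_simps)
  qed
  have dns: "\<not> summable d" unfolding d_def by (rule not_summable_min[OF delta0 ns cp])
  have small: "\<exists>n. V n < e" if "0 < e" for e
    by (rule decay_to_zero[OF Vnn _ _ step dns that]) (use cp delta0 in \<open>auto simp: d_def\<close>)
  show ?thesis
  proof (rule tendstoI)
    fix e :: real assume e: "0 < e"
    obtain n where n: "V n < e^2" using small[of "e^2"] e by auto
    show "eventually (\<lambda>t. dist (norm (x i t - xbar)) 0 < e) at_top"
      unfolding eventually_at_top_linorder
    proof (intro exI[of _ "tt n"] allI impI)
      fix t assume t: "tt n \<le> t"
      have t0: "0 \<le> t" using tt0[of n] t by simp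
      have "(norm (Y t i))^2 \<le> VV (Y t)" by (rule VV_ge[OF t0])
      also have "\<dots> \<le> V n" unfolding V_def by (rule VV_mono[OF tt0 t])
      also have "\<dots> < e^2" by (rule n)
      finally have "norm (Y t i) < e" using e by (simp add: power_less_imp_less_base)
      then show "dist (norm (x i t - xbar)) 0 < e" by (simp add: Y_def)
    qed
  qed
qed

end

theorem theorem4:
  fixes Q :: "real \<Rightarrow> real^'n^'n"
    and \<gamma> :: "'p::finite \<Rightarrow> 'p \<Rightarrow> real"
    and x :: "'p \<Rightarrow> real \<Rightarrow> real^'n"
    and r :: "'p \<Rightarrow> real"
  assumes Qbar: "\<And>t. 0 \<le> t \<Longrightarrow> Q t \<in> Qbar"
    and Qriem: "\<And>a b. 0 \<le> a \<Longrightarrow> a \<le> b \<Longrightarrow> riemann_integrable_on Q a b"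
    and Qexc: "sufficiently_exciting Q"
    and \<Gamma>: "interconnection \<gamma>"
    and conn: "connected_graph \<gamma>"
    and sol: "\<And>i t. 0 \<le> t \<Longrightarrow>
       ((\<lambda>s. Q s *v (\<Sum>j\<in>UNIV - {i}. \<gamma> i j *\<^sub>R (x j s - x i s))) has_integral (x i t - x i 0)) {0..t}"
    and r_left: "\<And>j. (\<Sum>i\<in>UNIV. r i * \<gamma> i j) = 0"
    and r_sum: "(\<Sum>i\<in>UNIV. r i) = 1"
  shows "\<forall>i. ((\<lambda>t. norm (x i t - (\<Sum>j\<in>UNIV. r j *\<^sub>R x j 0))) \<longlongrightarrow> 0) at_top"
proof -
  interpret sy: sysm \<gamma> r Q x
    using \<Gamma> conn r_left r_sum Qbar Qriem sol by unfold_locales auto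
  show ?thesis using sy.final[OF Qexc] unfolding sy.xbar_def by blast
qed

end
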